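(* Let $\mu,\phi$ satisfy $\phi''(x) = 1 - \int_{\mathbb{R}} \mu(\tfrac12 v^2 + \phi(x))\,dv$ and assumptions (i)–(iv) below, and let $q(x) = \int_{\mathbb{R}} \mu'(\tfrac12 v^2 + \phi(x))\,dv$. Then $u=\phi'$ is an eigenfunction with eigenvalue $0$ of the Dirichlet Sturm–Liouville problem $u''+(q+\lambda)u=0$, $u(0)=u(P_\phi)=0$, and it is the second eigenfunction. Consequently the smallest eigenvalue $\lambda_0$ of this problem satisfies $\lambda_0<0$, and its first eigenfunction $u_0$ satisfies $u_0(x) = u_0(P_\phi - x)$ and $u_0'(P_\phi-x) = -u_0'(x)$ for all $x\in[0,P_\phi]$; in particular $\psi = u_0u_0'$ satisfies $\psi(P_\phi - x) = -\psi(x)$.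
   Context: Assumptions: (i) $\mu\in C^1(\mathbb{R})$ is nonnegative; (ii) $\int_{\mathbb{R}} \mu(\tfrac12 v^2)\,dv = 1$; (iii) there are $\gamma>1$, $C>0$ with $|\mu'(y)| \le C/(1+|y|^\gamma)$ for all $y$; (iv) $\phi$ is nonconstant with minimal period $P_\phi$, and, writing $\phi_+ = \max\phi$, $\phi_- = \min\phi$, it is normalized so that $\phi(0)=\phi(P_\phi)=\phi_+$, $\phi(P_\phi/2) = \phi_-$, $\phi(x) = \phi(P_\phi - x)$ for all $x\in[0,P_\phi]$, and $\phi$ is strictly decreasing on $[0,P_\phi/2]$ (and strictly increasing on $[P_\phi/2,P_\phi]$ by symmetry). *)

theory Defs
  imports "HOL-Analysis.Analysis"
begin

definition sl_dirichlet_eigenfunction ::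
  "(real \<Rightarrow> real) \<Rightarrow> real \<Rightarrow> real \<Rightarrow> (real \<Rightarrow> real) \<Rightarrow> bool" where
  "sl_dirichlet_eigenfunction q L lam u \<longleftrightarrow>
     (\<exists>u' u''. \<forall>x\<in>{0..L}.
        (u has_real_derivative u' x) (at x within {0..L}) \<and>
        (u' has_real_derivative u'' x) (at x within {0..L}) \<and>
        u'' x + (q x + lam) * u x = 0) \<and>
     u 0 = 0 \<and> u L = 0 \<and> (\<exists>x\<in>{0..L}. u x \<noteq> 0)"

definition sl_dirichlet_eigenvalue :: "(real \<Rightarrow> real) \<Rightarrow> real \<Rightarrow> real \<Rightarrow> bool" where
  "sl_dirichlet_eigenvalue q L lam \<longleftrightarrow> (\<exists>u. sl_dirichlet_eigenfunction q L lam u)"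

end

theory Submission
  imports Defs "HOL-Probability.Sinc_Integral"
begin


lemma int_cont_deriv:
  fixes h :: "real \<Rightarrow> real"
  assumes "continuous_on {0..L} h" "x \<in> {0..L}"
  shows "((\<lambda>u. integral {0..u} h) has_real_derivative h x) (at x within {0..L})"
  using assms by (simp add: has_real_derivative_iff_has_vector_derivative integral_has_vector_derivative)

lemma int_cont_cont:
  fixes h :: "real \<Rightarrow> real"
  assumes "continuous_on {0..L} h"
  shows "continuous_on {0..L} (\<lambda>u. integral {0..u} h)"
  by (intro indefinite_integral_continuous_1 integrable_continuous_real assms)

lemma power_has_int:
  fixes s c :: real
  assumes "0 \<le> s"
  shows "((\<lambda>t. c * t^n) has_integral (c * s^(Suc n) / Suc n)) {0..s}"
proof -
  have "((\<lambda>t. c * t^n) has_integral ((\<lambda>t. c * t^(Suc n) / Suc n) s - (\<lambda>t. c * t^(Suc n) / Suc n) 0)) {0..s}"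
  proof (rule fundamental_theorem_of_calculus[OF assms])
    fix x assume "x \<in> {0..s}"
    have "((\<lambda>t. t^Suc n) has_real_derivative (Suc n) * x^n) (at x within {0..s})"
      using DERIV_pow[of "Suc n" x] by (simp add: has_field_derivative_at_within)
    then have "((\<lambda>t. c * t^Suc n / Suc n) has_real_derivative c * ((Suc n) * x^n) / Suc n) (at x within {0..s})"
      by (intro DERIV_cdivide DERIV_cmult)
    then show "((\<lambda>t. c * t^Suc n / Suc n) has_vector_derivative c * x^n) (at x within {0..s})"
      by (simp add: has_real_derivative_iff_has_vector_derivative[symmetric])
  qed
  then show ?thesis by simp
qed

primrec pic :: "(real \<Rightarrow> real) \<Rightarrow> nat \<Rightarrow> real \<Rightarrow> real" where
  "pic g 0 = (\<lambda>x. x)"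
| "pic g (Suc n) = (\<lambda>x. - integral {0..x} (\<lambda>s. integral {0..s} (\<lambda>t. g t * pic g n t)))"

definition pe :: "(real \<Rightarrow> real) \<Rightarrow> nat \<Rightarrow> real \<Rightarrow> real" where
  "pe g n s = integral {0..s} (\<lambda>t. g t * pic g n t)"

lemma pic_Suc': "pic g (Suc n) x = - integral {0..x} (pe g n)"
  by (simp add: pe_def[abs_def])

lemma pic_cont:
  assumes "continuous_on {0..L} g"
  shows "continuous_on {0..L} (pic g n) \<and> continuous_on {0..L} (pe g n)"
proof (induction n)
  case 0
  have "continuous_on {0..L} (pic g 0)" unfolding pic.simps by (rule continuous_on_id)
  moreover have "continuous_on {0..L} (pe g 0)"
    unfolding pe_def[abs_def] by (intro int_cont_cont continuous_intros assms calculation) 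
  ultimately show ?case by blast
next
  case (Suc n)
  have 1: "continuous_on {0..L} (pic g (Suc n))"
    unfolding pic_Suc'[abs_def] by (intro continuous_intros int_cont_cont Suc[THEN conjunct2])
  have "continuous_on {0..L} (pe g (Suc n))"
    unfolding pe_def[abs_def] by (intro int_cont_cont continuous_intros assms 1)
  with 1 show ?case by blast
qed

lemma int_bound_pow:
  fixes f :: "real \<Rightarrow> real"
  assumes "continuous_on {0..x} f" "0 \<le> x" "\<And>t. t \<in> {0..x} \<Longrightarrow> \<bar>f t\<bar> \<le> c * t^n"
  shows "\<bar>integral {0..x} f\<bar> \<le> c * x^(Suc n) / Suc n"
proof -
  have "norm (integral {0..x} f) \<le> integral {0..x} (\<lambda>t. c * t^n)"
    by (rule integral_norm_bound_integral) (use assms has_integral_integrable[OF power_has_int[OF assms(2)]] integrable_continuous_real in auto)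
  also have "\<dots> = c * x^(Suc n) / Suc n"
    using power_has_int[OF assms(2)] by (rule integral_unique)
  finally show ?thesis by simp
qed

lemma pe_bound_of:
  assumes g: "continuous_on {0..L} g" and M: "\<And>x. x \<in> {0..L} \<Longrightarrow> \<bar>g x\<bar> \<le> M"
    and M0: "0 \<le> M"
    and IH: "\<And>t. t \<in> {0..L} \<Longrightarrow> \<bar>pic g n t\<bar> \<le> L * (M*L)^n * t^n / fact n"
    and x: "x \<in> {0..L}"
  shows "\<bar>pe g n x\<bar> \<le> (M*L)^(Suc n) * x^(Suc n) / fact (Suc n)"
proof -
  have c: "continuous_on {0..x} (\<lambda>t. g t * pic g n t)"
    by (rule continuous_on_subset[of "{0..L}"]) (use x pic_cont[OF g] in \<open>auto intro!: continuous_intros g\<close>)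
  have "\<bar>pe g n x\<bar> \<le> ((M*L)^(Suc n) / fact n) * x^(Suc n) / Suc n"
    unfolding pe_def
  proof (rule int_bound_pow[OF c])
    fix t assume t: "t \<in> {0..x}"
    then have t': "t \<in> {0..L}" using x by auto
    have "\<bar>g t * pic g n t\<bar> \<le> M * (L * (M*L)^n * t^n / fact n)"
      unfolding abs_mult using IH[OF t'] M[OF t'] M0 by (intro mult_mono) auto
    then show "\<bar>g t * pic g n t\<bar> \<le> (M*L)^(Suc n) / fact n * t^n"
      by (simp add: field_simps)
  qed (use x in auto)
  also have "\<dots> = (M*L)^(Suc n) * x^(Suc n) / fact (Suc n)"
    by (simp add: field_simps)
  finally show ?thesis .
qed

lemma pic_bound:
  assumes g: "continuous_on {0..L} g" and M: "\<And>x. x \<in> {0..L} \<Longrightarrow> \<bar>g x\<bar> \<le> M"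
    and M0: "0 \<le> M"
  shows "x \<in> {0..L} \<Longrightarrow> \<bar>pic g n x\<bar> \<le> L * (M*L)^n * x^n / fact n"
proof (induction n arbitrary: x)
  case 0
  then show ?case by simp
next
  case (Suc n)
  note x = Suc.prems
  have c1: "continuous_on {0..x} (pe g n)"
    by (rule continuous_on_subset[of "{0..L}"]) (use x pic_cont[OF g] in auto)
  have "\<bar>pic g (Suc n) x\<bar> \<le> ((M*L)^(Suc n) / fact (Suc n)) * x^(Suc (Suc n)) / Suc (Suc n)"
    unfolding pic_Suc' abs_minus_cancel
  proof (rule int_bound_pow[OF c1])
    fix t assume "t \<in> {0..x}"
    then have "t \<in> {0..L}" using x by auto
    then show "\<bar>pe g n t\<bar> \<le> (M*L)^(Suc n) / fact (Suc n) * t^(Suc n)"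
      using pe_bound_of[OF g M M0 Suc.IH] by auto
  qed (use x in auto)
  also have "\<dots> \<le> L * (M*L)^(Suc n) * x^(Suc n) / fact (Suc n)"
  proof -
    have A: "0 \<le> (M*L)^(Suc n) / fact (Suc n) * x^(Suc n)" using x M0 by auto
    have "((M*L)^(Suc n) / fact (Suc n)) * x^(Suc (Suc n)) / Suc (Suc n)
         \<le> ((M*L)^(Suc n) / fact (Suc n)) * x^(Suc (Suc n))"
    proof -
      have "0 \<le> ((M*L)^(Suc n) / fact (Suc n)) * x^(Suc (Suc n))" using x M0 by auto
      then have "((M*L)^(Suc n) / fact (Suc n)) * x^(Suc (Suc n)) / real (Suc (Suc n))
          \<le> ((M*L)^(Suc n) / fact (Suc n)) * x^(Suc (Suc n)) / 1"
        by (intro divide_left_mono) auto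
      then show ?thesis by simp
    qed
    also have "\<dots> = ((M*L)^(Suc n) / fact (Suc n) * x^(Suc n)) * x" by simp
    also have "\<dots> \<le> ((M*L)^(Suc n) / fact (Suc n) * x^(Suc n)) * L"
      using A x by (intro mult_left_mono) auto
    finally show ?thesis by (simp add: mult_ac)
  qed
  finally show ?case .
qed

lemma ulim_integral_lim:
  fixes F :: "nat \<Rightarrow> real \<Rightarrow> real"
  assumes u: "uniform_limit {0..L} F G sequentially" and c: "\<And>n. continuous_on {0..L} (F n)"
    and x: "x \<in> {0..L}"
  shows "(\<lambda>n. integral {0..x} (F n)) \<longlonglongrightarrow> integral {0..x} G"
proof -
  have sub: "{0..x} \<subseteq> {0..L}" using x by auto
  have u': "uniform_limit {0..x} F G sequentially" using uniform_limit_on_subset[OF u sub] .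
  have c': "\<And>n. continuous_on {0..x} (F n)" using continuous_on_subset[OF c sub] .
  obtain I J where I: "\<And>n. (F n has_integral I n) {0..x}" and J: "(G has_integral J) {0..x}"
    and lim: "I \<longlonglongrightarrow> J"
    using uniform_limit_integral[OF u' c'] by auto
  have "(\<lambda>n. integral {0..x} (F n)) = I" using I integral_unique by blast
  moreover have "integral {0..x} G = J" using J integral_unique by blast
  ultimately show ?thesis using lim by simp
qed

lemma pic_zero: "pic g n 0 = 0"
  by (cases n) auto

lemma pe_zero: "pe g n 0 = 0"
  by (simp add: pe_def)

lemma ode_exists:
  fixes g :: "real \<Rightarrow> real"
  assumes L: "0 < L" and g: "continuous_on {0..L} g"
  shows "\<exists>y y1. y 0 = 0 \<and> y1 0 = 1 \<and> (\<forall>x\<in>{0..L}. (y has_real_derivative y1 x) (at x within {0..L})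
          \<and> (y1 has_real_derivative (- g x * y x)) (at x within {0..L}))"
proof -
  have "bounded (g ` {0..L})" by (intro compact_imp_bounded compact_continuous_image g) auto
  then obtain M where "\<forall>y\<in>g ` {0..L}. \<bar>y\<bar> \<le> M" unfolding bounded_real by blast
  then have M: "\<And>x. x\<in>{0..L} \<Longrightarrow> \<bar>g x\<bar> \<le> M" by blast
  have M0: "0 \<le> M" using M[of 0] L by auto
  define a where "a = M*L*L"
  have a0: "0 \<le> a" using M0 L by (simp add: a_def)
  have pb: "\<bar>pic g n x\<bar> \<le> L * (inverse (fact n) * a^n)" if x: "x\<in>{0..L}" for n x
  proof -
    have "\<bar>pic g n x\<bar> \<le> L * (M*L)^n * x^n / fact n" using pic_bound[OF g M M0 x] .
    also have "\<dots> \<le> L * (M*L)^n * L^n / fact n"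
      using x L M0 by (intro divide_right_mono mult_left_mono power_mono) auto
    also have "\<dots> = L * (inverse (fact n) * a^n)" by (simp add: a_def power_mult_distrib field_simps)
    finally show ?thesis .
  qed
  have eb: "\<bar>pe g n x\<bar> \<le> inverse (fact (n+1)) * a^(n+1)" if x: "x\<in>{0..L}" for n x
  proof -
    have "\<bar>pe g n x\<bar> \<le> (M*L)^(Suc n) * x^(Suc n) / fact (Suc n)"
      using pe_bound_of[OF g M M0 pic_bound[OF g M M0] x] by blast
    also have "\<dots> \<le> (M*L)^(Suc n) * L^(Suc n) / fact (Suc n)"
      using x L M0 by (intro divide_right_mono mult_left_mono power_mono) auto
    also have "\<dots> = inverse (fact (n+1)) * a^(n+1)" by (simp add: a_def power_mult_distrib field_simps)
    finally show ?thesis .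
  qed
  have s1: "summable (\<lambda>n. L * (inverse (fact n) * a^n))"
    by (intro summable_mult summable_exp)
  have s2: "summable (\<lambda>n. inverse (fact (n+1)) * a^(n+1))"
    using summable_ignore_initial_segment[OF summable_exp[of a], of 1] by simp
  have s3: "summable (\<lambda>n. M * (L * (inverse (fact n) * a^n)))"
    by (intro summable_mult s1)
  define Y where "Y x = (\<Sum>n. pic g n x)" for x
  define Z where "Z x = (\<Sum>n. pe g n x)" for x
  have sumY: "summable (\<lambda>n. pic g n x)" if "x \<in> {0..L}" for x
    by (rule summable_comparison_test'[OF s1]) (use pb that in auto)
  have sumZ: "summable (\<lambda>n. pe g n x)" if "x \<in> {0..L}" for x
    by (rule summable_comparison_test'[OF s2]) (use eb that in auto)
  have uY: "uniform_limit {0..L} (\<lambda>N x. \<Sum>n<N. pic g n x) Y sequentially"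
    unfolding Y_def by (rule Weierstrass_m_test[OF _ s1]) (use pb in auto)
  have uZ: "uniform_limit {0..L} (\<lambda>N x. \<Sum>n<N. pe g n x) Z sequentially"
    unfolding Z_def by (rule Weierstrass_m_test[OF _ s2]) (use eb in auto)
  have uGY0: "uniform_limit {0..L} (\<lambda>N x. \<Sum>n<N. g x * pic g n x) (\<lambda>x. \<Sum>n. g x * pic g n x) sequentially"
  proof (rule Weierstrass_m_test[OF _ s3])
    fix n x assume x: "x \<in> {0..L}"
    show "norm (g x * pic g n x) \<le> M * (L * (inverse (fact n) * a^n))"
      unfolding norm_mult real_norm_def abs_mult using M[OF x] pb[OF x, of n] by (intro mult_mono) auto
  qed
  have uGY: "uniform_limit {0..L} (\<lambda>N x. \<Sum>n<N. g x * pic g n x) (\<lambda>x. g x * Y x) sequentially"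
    using uGY0 by (rule uniform_limit_cong'[THEN iffD1, rotated -1]) (auto simp: Y_def suminf_mult sumY)
  have cpic: "continuous_on {0..L} (pic g n)" "continuous_on {0..L} (pe g n)" for n
    using pic_cont[OF g] by auto
  have cY: "continuous_on {0..L} Y"
    by (rule uniform_limit_theorem[OF _ uY]) (auto intro!: always_eventually continuous_intros cpic)
  have cZ: "continuous_on {0..L} Z"
    by (rule uniform_limit_theorem[OF _ uZ]) (auto intro!: always_eventually continuous_intros cpic)
  have I1: "Y x = x - integral {0..x} Z" if x: "x \<in> {0..L}" for x
  proof -
    have cs: "continuous_on {0..x} (pe g n)" for n
      by (rule continuous_on_subset[OF cpic(2)]) (use x in auto)
    have eq: "(\<Sum>n<Suc N. pic g n x) = x - integral {0..x} (\<lambda>s. \<Sum>n<N. pe g n s)" for N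
      by (subst sum.lessThan_Suc_shift)
         (simp del: pic.simps add: pic.simps(1) pic_Suc' integral_sum integrable_continuous_real cs sum_negf)
    have l1: "(\<lambda>N. \<Sum>n<Suc N. pic g n x) \<longlonglongrightarrow> Y x"
      unfolding Y_def using summable_LIMSEQ[OF sumY[OF x]] by (rule LIMSEQ_Suc)
    have l2: "(\<lambda>N. x - integral {0..x} (\<lambda>s. \<Sum>n<N. pe g n s)) \<longlonglongrightarrow> x - integral {0..x} Z"
      by (intro tendsto_diff tendsto_const ulim_integral_lim[OF uZ _ x]) (auto intro!: continuous_intros cpic)
    show ?thesis using LIMSEQ_unique[OF l1] l2 eq by simp
  qed
  have I2: "Z x = integral {0..x} (\<lambda>t. g t * Y t)" if x: "x \<in> {0..L}" for x
  proof -
    have cs: "continuous_on {0..x} (\<lambda>t. g t * pic g n t)" for n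
      by (rule continuous_on_subset[of "{0..L}"]) (use x in \<open>auto intro!: continuous_intros cpic g\<close>)
    have eq: "(\<Sum>n<N. pe g n x) = integral {0..x} (\<lambda>t. \<Sum>n<N. g t * pic g n t)" for N
      by (simp add: pe_def integral_sum integrable_continuous_real cs)
    have l1: "(\<lambda>N. \<Sum>n<N. pe g n x) \<longlonglongrightarrow> Z x"
      unfolding Z_def using summable_LIMSEQ[OF sumZ[OF x]] .
    have l2: "(\<lambda>N. integral {0..x} (\<lambda>t. \<Sum>n<N. g t * pic g n t)) \<longlonglongrightarrow> integral {0..x} (\<lambda>t. g t * Y t)"
      by (intro ulim_integral_lim[OF uGY _ x]) (auto intro!: continuous_intros cpic g)
    show ?thesis using LIMSEQ_unique[OF l1] l2 eq by simp
  qed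
  have cGY: "continuous_on {0..L} (\<lambda>t. g t * Y t)" by (intro continuous_intros g cY)
  show ?thesis
  proof (intro exI conjI ballI)
    show "Y 0 = 0" by (simp add: Y_def pic_zero)
    show "1 - Z 0 = 1" by (simp add: Z_def pe_zero)
  next
    fix x assume x: "x \<in> {0..L}"
    have "((\<lambda>u. u - integral {0..u} Z) has_real_derivative 1 - Z x) (at x within {0..L})"
      by (intro DERIV_diff DERIV_ident int_cont_deriv cZ x)
    then show "(Y has_real_derivative 1 - Z x) (at x within {0..L})"
      by (rule has_field_derivative_transform_within[OF _ zero_less_one x]) (simp add: I1)
    have "((\<lambda>u. 1 - integral {0..u} (\<lambda>t. g t * Y t)) has_real_derivative 0 - g x * Y x) (at x within {0..L})"
      by (intro DERIV_diff DERIV_const int_cont_deriv cGY x)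
    then have "((\<lambda>u. 1 - integral {0..u} (\<lambda>t. g t * Y t)) has_real_derivative - g x * Y x) (at x within {0..L})"
      by simp
    then show "((\<lambda>x. 1 - Z x) has_real_derivative - g x * Y x) (at x within {0..L})"
      by (rule has_field_derivative_transform_within[OF _ zero_less_one x]) (simp_all add: I2)
  qed
qed

definition sol :: "(real \<Rightarrow> real) \<Rightarrow> real \<Rightarrow> (real \<Rightarrow> real) \<Rightarrow> (real \<Rightarrow> real) \<Rightarrow> bool" where
  "sol g L u u1 \<longleftrightarrow> (\<forall>x\<in>{0..L}. (u has_real_derivative u1 x) (at x within {0..L})
          \<and> (u1 has_real_derivative (- g x * u x)) (at x within {0..L}))"

lemma mono_within:
  fixes G G' :: "real \<Rightarrow> real"
  assumes d: "\<And>t. t\<in>{0..L} \<Longrightarrow> (G has_real_derivative G' t) (at t within {0..L})"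
    and ab: "a \<le> b" "0 \<le> a" "b \<le> L" and nn: "\<And>t. a < t \<Longrightarrow> t < b \<Longrightarrow> G' t \<ge> 0"
  shows "G a \<le> G b"
proof (rule DERIV_nonneg_imp_increasing_open[OF ab(1)])
  show "continuous_on {a..b} G"
    by (rule continuous_on_subset[OF DERIV_continuous_on[OF d]]) (use ab in auto)
  fix t assume t: "a < t" "t < b"
  have "(G has_real_derivative G' t) (at t within {0..L})" using d t ab by auto
  moreover have "at t within {0..L} = at t" using t ab by (intro at_within_Icc_at) auto
  ultimately show "\<exists>y. DERIV G t :> y \<and> 0 \<le> y" using nn t by auto
qed

lemma dexp_lin: "((\<lambda>t. exp (c * (t - a))) has_real_derivative exp (c*(t-a)) * c) (at t within S)"
  by (rule DERIV_cong[OF DERIV_chain2[OF DERIV_exp DERIV_cmult[OF DERIV_diff[OF DERIV_ident DERIV_const]]]]) simp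

lemma dexp_lin0: "((\<lambda>t. exp (c * t)) has_real_derivative exp (c*t) * c) (at t within S)"
  by (rule DERIV_cong[OF DERIV_chain2[OF DERIV_exp DERIV_cmult[OF DERIV_ident]]]) simp

lemma gronwall_fwd:
  fixes E E' :: "real \<Rightarrow> real"
  assumes d: "\<And>t. t\<in>{0..L} \<Longrightarrow> (E has_real_derivative E' t) (at t within {0..L})"
    and le: "\<And>t. t\<in>{0..L} \<Longrightarrow> E' t \<le> c * E t + dd" and c: "0 \<le> c" and dd: "0 \<le> dd"
    and a: "0 \<le> a" and x: "a \<le> x" "x \<le> L"
  shows "E x \<le> (E a + dd * (x - a)) * exp (c * (x - a))"
proof -
  define G where "G t = dd * (t - a) - E t * exp (- c * (t - a))" for t
  have "G a \<le> G x"
  proof (rule mono_within[OF _ x(1) a x(2)])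
    fix t assume t: "t \<in> {0..L}"
    show "(G has_real_derivative (dd - (E' t * exp (- c * (t - a)) + E t * (exp (- c * (t - a)) * (- c))))) (at t within {0..L})"
      unfolding G_def[abs_def]
      by (rule DERIV_cong[OF DERIV_diff[OF DERIV_cmult[OF DERIV_diff[OF DERIV_ident DERIV_const]] DERIV_mult[OF d[OF t] dexp_lin]]])
         (simp add: algebra_simps)
  next
    fix t assume t: "a < t" "t < x"
    then have t': "t \<in> {0..L}" using a x by auto
    have e0: "0 < exp (- c * (t - a))" by simp
    have e1: "exp (- c * (t - a)) \<le> 1" using t c by (simp add: mult_nonneg_nonneg)
    have "E' t * exp (- c * (t - a)) \<le> (c * E t + dd) * exp (- c * (t - a))"
      using le[OF t'] e0 by (intro mult_right_mono) auto
    also have "\<dots> = c * E t * exp (- c * (t - a)) + dd * exp (- c * (t - a))" by (simp add: algebra_simps)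
    also have "dd * exp (- c * (t - a)) \<le> dd" using e1 dd by (simp add: mult_left_le)
    finally show "0 \<le> dd - (E' t * exp (- c * (t - a)) + E t * (exp (- c * (t - a)) * - c))"
      by (simp add: algebra_simps)
  qed
  then have "- E a \<le> dd * (x - a) - E x * exp (- c * (x - a))" by (simp add: G_def)
  then have H: "E x * exp (- c * (x - a)) \<le> E a + dd * (x - a)" by simp
  have "E x = (E x * exp (- c * (x - a))) * exp (c * (x - a))"
    by (simp add: mult.assoc exp_add[symmetric])
  also have "\<dots> \<le> (E a + dd * (x - a)) * exp (c * (x - a))"
    using H by (intro mult_right_mono) auto
  finally show ?thesis .
qed

lemma gronwall_bwd:
  fixes E E' :: "real \<Rightarrow> real"
  assumes d: "\<And>t. t\<in>{0..L} \<Longrightarrow> (E has_real_derivative E' t) (at t within {0..L})"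
    and le: "\<And>t. t\<in>{0..L} \<Longrightarrow> - c * E t \<le> E' t"
    and x: "0 \<le> x" "x \<le> a" and a: "a \<le> L"
  shows "E x * exp (c * x) \<le> E a * exp (c * a)"
proof (rule mono_within[OF _ x(2) x(1) a])
  fix t assume t: "t \<in> {0..L}"
  show "((\<lambda>t. E t * exp (c * t)) has_real_derivative (E' t * exp (c * t) + E t * (exp (c * t) * c))) (at t within {0..L})"
    using DERIV_mult[OF d[OF t] dexp_lin0[of c t "{0..L}"]] by (simp add: algebra_simps)
next
  fix t assume t: "x < t" "t < a"
  then have t': "t \<in> {0..L}" using a x by auto
  have "0 \<le> (E' t + c * E t) * exp (c * t)" using le[OF t'] by simp
  then show "0 \<le> E' t * exp (c * t) + E t * (exp (c * t) * c)" by (simp add: algebra_simps)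
qed

lemma sol_energy:
  assumes s: "sol g L u u1" and t: "t \<in> {0..L}"
  shows "((\<lambda>x. (u x)\<^sup>2 + (u1 x)\<^sup>2) has_real_derivative 2 * u t * u1 t * (1 - g t)) (at t within {0..L})"
proof -
  have d1: "(u has_real_derivative u1 t) (at t within {0..L})" and d2: "(u1 has_real_derivative (- g t * u t)) (at t within {0..L})"
    using s t by (auto simp: sol_def)
  show ?thesis
    unfolding power2_eq_square
    by (rule DERIV_cong[OF DERIV_add[OF DERIV_mult[OF d1 d1] DERIV_mult[OF d2 d2]]]) (simp add: algebra_simps)
qed

lemma energy_bound:
  fixes u u1 g :: "real \<Rightarrow> real"
  assumes "\<bar>g t\<bar> \<le> M"
  shows "\<bar>2 * u t * u1 t * (1 - g t)\<bar> \<le> (1 + M) * ((u t)\<^sup>2 + (u1 t)\<^sup>2)"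
proof -
  have "\<bar>2 * u t * u1 t\<bar> \<le> (u t)\<^sup>2 + (u1 t)\<^sup>2"
  proof -
    have "0 \<le> (\<bar>u t\<bar> - \<bar>u1 t\<bar>)\<^sup>2" by simp
    also have "\<dots> = (u t)\<^sup>2 + (u1 t)\<^sup>2 - 2 * \<bar>u t\<bar> * \<bar>u1 t\<bar>"
      by (simp add: power2_diff)
    finally show ?thesis by (simp add: abs_mult)
  qed
  moreover have "\<bar>1 - g t\<bar> \<le> 1 + M" using assms by auto
  ultimately have "\<bar>2 * u t * u1 t\<bar> * \<bar>1 - g t\<bar> \<le> ((u t)\<^sup>2 + (u1 t)\<^sup>2) * (1 + M)"
    by (intro mult_mono) auto
  then show ?thesis by (metis abs_mult mult.commute)
qed

lemma ode_unique:
  assumes s: "sol g L u u1" and M: "\<And>t. t \<in> {0..L} \<Longrightarrow> \<bar>g t\<bar> \<le> M"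
    and a: "a \<in> {0..L}" and ua: "u a = 0" and u1a: "u1 a = 0" and x: "x \<in> {0..L}"
  shows "u x = 0 \<and> u1 x = 0"
proof -
  define E where "E x = (u x)\<^sup>2 + (u1 x)\<^sup>2" for x
  have d: "\<And>t. t\<in>{0..L} \<Longrightarrow> (E has_real_derivative 2 * u t * u1 t * (1 - g t)) (at t within {0..L})"
    unfolding E_def[abs_def] using sol_energy[OF s] by blast
  have b: "\<And>t. t\<in>{0..L} \<Longrightarrow> \<bar>2 * u t * u1 t * (1 - g t)\<bar> \<le> (1 + M) * E t"
    unfolding E_def using energy_bound M by blast
  have M0: "0 \<le> M" using M[OF a] by auto
  have Ea: "E a = 0" by (simp add: E_def ua u1a)
  have "E x \<le> 0"
  proof (cases "a \<le> x")
    case True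
    have "E x \<le> (E a + 0 * (x - a)) * exp ((1+M) * (x - a))"
      by (rule gronwall_fwd[OF d]) (use b a x True M0 in \<open>auto simp: abs_le_iff\<close>)
    then show ?thesis using Ea by simp
  next
    case False
    have "E x * exp ((1+M) * x) \<le> E a * exp ((1+M) * a)"
    proof (rule gronwall_bwd[OF d])
      fix t assume t: "t \<in> {0..L}"
      have "\<bar>2 * u t * u1 t * (1 - g t)\<bar> \<le> (1 + M) * E t" by (rule b[OF t])
      moreover have "- (1 + M) * E t = - ((1 + M) * E t)" by (simp only: mult_minus_left)
      ultimately show "- (1 + M) * E t \<le> 2 * u t * u1 t * (1 - g t)" unfolding abs_le_iff by linarith
    qed (use a x False in auto)
    then have "E x * exp ((1+M) * x) \<le> 0" using Ea by simp
    then show ?thesis by (simp add: mult_le_0_iff)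
  qed
  then show ?thesis unfolding E_def by (simp add: sum_power2_le_zero_iff)
qed


lemma deriv_unique_within:
  fixes f :: "real \<Rightarrow> real"
  assumes L: "0 < L" and x: "x \<in> {0..L}"
    and d1: "(f has_real_derivative a) (at x within {0..L})"
    and d2: "(f has_real_derivative b) (at x within {0..L})"
  shows "a = b"
proof -
  have "(f has_vector_derivative a) (at x within cbox 0 L)" "(f has_vector_derivative b) (at x within cbox 0 L)"
    using d1 d2 by (auto simp: has_real_derivative_iff_has_vector_derivative)
  then show ?thesis
    using vector_derivative_unique_within_closed_interval[OF L] x by auto
qed

lemma sol_lin:
  assumes su: "sol g L u u1" and sv: "sol g L v v1"
  shows "sol g L (\<lambda>x. \<alpha> * u x + \<beta> * v x) (\<lambda>x. \<alpha> * u1 x + \<beta> * v1 x)"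
  unfolding sol_def
proof
  fix x assume x: "x \<in> {0..L}"
  have a: "(u has_real_derivative u1 x) (at x within {0..L})" "(u1 has_real_derivative (- g x * u x)) (at x within {0..L})"
    "(v has_real_derivative v1 x) (at x within {0..L})" "(v1 has_real_derivative (- g x * v x)) (at x within {0..L})"
    using su sv x by (auto simp: sol_def)
  show "((\<lambda>x. \<alpha> * u x + \<beta> * v x) has_real_derivative \<alpha> * u1 x + \<beta> * v1 x) (at x within {0..L}) \<and>
        ((\<lambda>x. \<alpha> * u1 x + \<beta> * v1 x) has_real_derivative - g x * (\<alpha> * u x + \<beta> * v x)) (at x within {0..L})"
    by (intro conjI DERIV_add DERIV_cmult a DERIV_cong[OF DERIV_add[OF DERIV_cmult[OF a(2)] DERIV_cmult[OF a(4)]]])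
       (simp add: algebra_simps)
qed

lemma sol_cont:
  assumes "sol g L u u1"
  shows "continuous_on {0..L} u" "continuous_on {0..L} u1"
  using assms unfolding sol_def by (auto intro!: DERIV_continuous_on)

lemma eig_sol:
  assumes "sl_dirichlet_eigenfunction q L lam u"
  shows "\<exists>u1. sol (\<lambda>x. q x + lam) L u u1"
proof -
  obtain u' u'' where h: "\<forall>x\<in>{0..L}.
        (u has_real_derivative u' x) (at x within {0..L}) \<and>
        (u' has_real_derivative u'' x) (at x within {0..L}) \<and>
        u'' x + (q x + lam) * u x = 0"
    using assms unfolding sl_dirichlet_eigenfunction_def by blast
  have "sol (\<lambda>x. q x + lam) L u u'"
    unfolding sol_def
  proof
    fix x assume x: "x \<in> {0..L}"
    have e: "u'' x + (q x + lam) * u x = 0" using h x by blast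
    have "u'' x = - ((q x + lam) * u x)" using e by linarith
    then have e2: "u'' x = - (q x + lam) * u x" by (simp add: algebra_simps)
    have d1: "(u has_real_derivative u' x) (at x within {0..L})"
      and d2: "(u' has_real_derivative u'' x) (at x within {0..L})" using h x by blast+
    show "(u has_real_derivative u' x) (at x within {0..L}) \<and>
         (u' has_real_derivative - (q x + lam) * u x) (at x within {0..L})" using d1 d2 unfolding e2 by blast
  qed
  then show ?thesis by blast
qed

lemma sol_eig:
  assumes s: "sol (\<lambda>x. q x + lam) L u u1" and "u 0 = 0" "u L = 0" "\<exists>x\<in>{0..L}. u x \<noteq> 0"
  shows "sl_dirichlet_eigenfunction q L lam u"
proof -
  have H: "\<forall>x\<in>{0..L}.
        (u has_real_derivative u1 x) (at x within {0..L}) \<and>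
        (u1 has_real_derivative - (q x + lam) * u x) (at x within {0..L}) \<and>
        - (q x + lam) * u x + (q x + lam) * u x = 0"
  proof
    fix x assume x: "x \<in> {0..L}"
    have d1: "(u has_real_derivative u1 x) (at x within {0..L})"
      and d2: "(u1 has_real_derivative - (q x + lam) * u x) (at x within {0..L})"
      using s x unfolding sol_def by blast+
    have e: "- (q x + lam) * u x + (q x + lam) * u x = 0" by (simp only: mult_minus_left add.left_inverse)
    show "(u has_real_derivative u1 x) (at x within {0..L}) \<and>
        (u1 has_real_derivative - (q x + lam) * u x) (at x within {0..L}) \<and>
        - (q x + lam) * u x + (q x + lam) * u x = 0"
      using d1 d2 e by (intro conjI)
  qed
  show ?thesis unfolding sl_dirichlet_eigenfunction_def
    apply (intro conjI assms(2,3,4))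
    apply (rule exI[of _ u1], rule exI[of _ "\<lambda>x. - (q x + lam) * u x"])
    using H by assumption
qed

lemma consec_zeros:
  fixes u :: "real \<Rightarrow> real"
  assumes c: "continuous_on {0..L} u" and u0: "u 0 = 0" and uL: "u L = 0"
    and x1: "x1 \<in> {0..L}" and ux: "u x1 \<noteq> 0"
  shows "\<exists>a b. 0 \<le> a \<and> a < x1 \<and> x1 < b \<and> b \<le> L \<and> u a = 0 \<and> u b = 0 \<and> (\<forall>x\<in>{a<..<b}. u x \<noteq> 0)"
proof -
  have c1: "continuous_on {0..x1} u" "continuous_on {x1..L} u"
    using x1 by (auto intro: continuous_on_subset[OF c])
  have cl1: "closed {x \<in> {0..x1}. u x = 0}" by (rule continuous_closed_preimage_constant[OF c1(1)]) auto
  have cl2: "closed {x \<in> {x1..L}. u x = 0}" by (rule continuous_closed_preimage_constant[OF c1(2)]) auto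
  have "bounded {x \<in> {0..x1}. u x = 0}" by (rule bounded_subset[of "{0..x1}"]) auto
  then have k1: "compact {x \<in> {0..x1}. u x = 0}" using cl1 compact_eq_bounded_closed by blast
  have "bounded {x \<in> {x1..L}. u x = 0}" by (rule bounded_subset[of "{x1..L}"]) auto
  then have k2: "compact {x \<in> {x1..L}. u x = 0}" using cl2 compact_eq_bounded_closed by blast
  have ne1: "{x \<in> {0..x1}. u x = 0} \<noteq> {}" using x1 u0 by auto
  have ne2: "{x \<in> {x1..L}. u x = 0} \<noteq> {}" using x1 uL by auto
  obtain a where a: "a \<in> {x \<in> {0..x1}. u x = 0}" "\<forall>y\<in>{x \<in> {0..x1}. u x = 0}. y \<le> a"
    using compact_attains_sup[OF k1 ne1] by blast
  obtain b where b: "b \<in> {x \<in> {x1..L}. u x = 0}" "\<forall>y\<in>{x \<in> {x1..L}. u x = 0}. b \<le> y"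
    using compact_attains_inf[OF k2 ne2] by blast
  have "a \<noteq> x1" "b \<noteq> x1" using a b ux by auto
  moreover have "\<forall>x\<in>{a<..<b}. u x \<noteq> 0"
  proof
    fix x assume x: "x \<in> {a<..<b}"
    show "u x \<noteq> 0"
    proof
      assume ux0: "u x = 0"
      have "0 \<le> a" "b \<le> L" using a b by auto
      show False
      proof (cases "x \<le> x1")
        case True
        then have "x \<in> {x \<in> {0..x1}. u x = 0}" using ux0 x \<open>0 \<le> a\<close> by auto
        then have "x \<le> a" using a(2) by blast
        then show False using x by auto
      next
        case False
        then have "x \<in> {x \<in> {x1..L}. u x = 0}" using ux0 x \<open>b \<le> L\<close> by auto
        then have "b \<le> x" using b(2) by blast
        then show False using x by auto
      qed
    qed
  qed
  moreover have "0 \<le> a" "a \<le> x1" "x1 \<le> b" "b \<le> L" "u a = 0" "u b = 0" using a b by auto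
  ultimately have "0 \<le> a \<and> a < x1 \<and> x1 < b \<and> b \<le> L \<and> u a = 0 \<and> u b = 0 \<and> (\<forall>x\<in>{a<..<b}. u x \<noteq> 0)"
    by auto
  then show ?thesis by blast
qed

lemma sol_scale:
  assumes su: "sol g L u u1"
  shows "sol g L (\<lambda>x. c * u x) (\<lambda>x. c * u1 x)"
  unfolding sol_def
proof
  fix x assume x: "x \<in> {0..L}"
  have a: "(u has_real_derivative u1 x) (at x within {0..L})" "(u1 has_real_derivative (- g x * u x)) (at x within {0..L})"
    using su x by (auto simp: sol_def)
  show "((\<lambda>x. c * u x) has_real_derivative c * u1 x) (at x within {0..L}) \<and>
        ((\<lambda>x. c * u1 x) has_real_derivative - g x * (c * u x)) (at x within {0..L})"
    by (intro conjI DERIV_cmult a DERIV_cong[OF DERIV_cmult[OF a(2)]]) (simp add: algebra_simps)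
qed

lemma cont_endpoints_nonneg:
  fixes f :: "real \<Rightarrow> real"
  assumes c: "continuous_on {0..L} f" and ab: "0 \<le> a" "a < b" "b \<le> L"
    and pos: "\<And>x. x \<in> {a<..<b} \<Longrightarrow> f x > 0"
  shows "f a \<ge> 0" "f b \<ge> 0"
proof -
  have c': "continuous_on (closure {a<..<b}) f"
    using ab by (auto intro: continuous_on_subset[OF c])
  show "f a \<ge> 0" "f b \<ge> 0"
    by (rule continuous_ge_on_closure[OF c'], use ab pos in \<open>auto intro: less_imp_le\<close>)+
qed

lemma deriv_left_end:
  fixes U :: "real \<Rightarrow> real"
  assumes d: "(U has_real_derivative D) (at a within {0..L})" and Ua: "U a = 0"
    and ab: "0 \<le> a" "a < b" "b \<le> L" and pos: "\<And>x. x \<in> {a<..<b} \<Longrightarrow> U x > 0"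
  shows "D \<ge> 0"
proof (rule ccontr)
  assume "\<not> D \<ge> 0"
  then obtain e where e: "e > 0" "\<forall>h>0. a + h \<in> {0..L} \<longrightarrow> h < e \<longrightarrow> U a > U (a + h)"
    using has_real_derivative_neg_dec_right[OF d] by force
  define h where "h = min (e/2) ((b-a)/2)"
  have h0: "h > 0" "h \<le> e/2" "h \<le> (b-a)/2" using e ab by (auto simp: h_def min_def)
  then have h: "h > 0" "h < e" "a + h \<in> {a<..<b}" using e ab by auto
  then have "U (a + h) > 0" using pos by auto
  moreover have "U a > U (a + h)" using e h ab by auto
  ultimately show False using Ua by simp
qed

lemma deriv_right_end:
  fixes U :: "real \<Rightarrow> real"
  assumes d: "(U has_real_derivative D) (at b within {0..L})" and Ub: "U b = 0"
    and ab: "0 \<le> a" "a < b" "b \<le> L" and pos: "\<And>x. x \<in> {a<..<b} \<Longrightarrow> U x > 0"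
  shows "D \<le> 0"
proof (rule ccontr)
  assume "\<not> D \<le> 0"
  then have "- D < 0" by simp
  then obtain e where e: "e > 0" "\<forall>h>0. b - h \<in> {0..L} \<longrightarrow> h < e \<longrightarrow> - U b < - U (b - h)"
    using has_real_derivative_neg_dec_left[OF DERIV_minus[OF d]] by force
  define h where "h = min (e/2) ((b-a)/2)"
  have h0: "h > 0" "h \<le> e/2" "h \<le> (b-a)/2" using e ab by (auto simp: h_def min_def)
  then have h: "h > 0" "h < e" "b - h \<in> {a<..<b}" using e ab by auto
  then have "U (b - h) > 0" using pos by auto
  moreover have "- U b < - U (b - h)" using e h ab by auto
  ultimately show False using Ub by simp
qed

lemma sturm_pos:
  assumes L: "0 < L" and su: "sol (\<lambda>x. q x + l) L U U1" and sv: "sol (\<lambda>x. q x + m) L V V1"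
    and lm: "l < m" and ab: "0 \<le> a" "a < b" "b \<le> L" and Ua: "U a = 0" and Ub: "U b = 0"
    and pos: "\<And>x. x \<in> {a<..<b} \<Longrightarrow> U x > 0 \<and> V x > 0"
  shows False
proof -
  define W where "W t = U1 t * V t - U t * V1 t" for t
  have dW: "(W has_real_derivative (m - l) * U t * V t) (at t within {0..L})" if t: "t \<in> {0..L}" for t
  proof -
    have a: "(U has_real_derivative U1 t) (at t within {0..L})" "(U1 has_real_derivative (- (q t + l) * U t)) (at t within {0..L})"
      "(V has_real_derivative V1 t) (at t within {0..L})" "(V1 has_real_derivative (- (q t + m) * V t)) (at t within {0..L})"
      using su sv t by (auto simp: sol_def)
    show ?thesis unfolding W_def[abs_def]
      by (rule DERIV_cong[OF DERIV_diff[OF DERIV_mult[OF a(2) a(3)] DERIV_mult[OF a(1) a(4)]]])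
         (simp add: algebra_simps)
  qed
  have cW: "continuous_on {a..b} W"
    by (rule continuous_on_subset[OF DERIV_continuous_on[OF dW]]) (use ab in auto)
  have dif: "W differentiable (at x)" if x: "a < x" "x < b" for x
  proof -
    have "at x within {0..L} = at x" using x ab by (intro at_within_Icc_at) auto
    then show "W differentiable (at x)" using dW[of x] x ab
      by (auto simp: real_differentiable_def)
  qed
  obtain l' z where z: "a < z" "z < b" "DERIV W z :> l'" "W b - W a = (b - a) * l'"
    using MVT[OF ab(2) cW dif] by blast
  have "at z within {0..L} = at z" using z ab by (intro at_within_Icc_at) auto
  then have "l' = (m - l) * U z * V z" using DERIV_unique[OF z(3)] dW[of z] z ab by auto
  moreover have "U z > 0" "V z > 0" using pos z by auto
  ultimately have "l' > 0" using lm by simp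
  then have "W b - W a > 0" using z ab by simp
  moreover have "W a \<ge> 0"
  proof -
    have "U1 a \<ge> 0"
      by (rule deriv_left_end[of U "U1 a" a L b]) (use su ab pos Ua in \<open>auto simp: sol_def\<close>)
    moreover have "V a \<ge> 0"
      by (rule cont_endpoints_nonneg[OF sol_cont(1)[OF sv] ab]) (use pos in auto)
    ultimately show ?thesis by (simp add: W_def Ua)
  qed
  moreover have "W b \<le> 0"
  proof -
    have "U1 b \<le> 0"
      by (rule deriv_right_end[of U "U1 b" b L a]) (use su ab pos Ub in \<open>auto simp: sol_def\<close>)
    moreover have "V b \<ge> 0"
      by (rule cont_endpoints_nonneg[OF sol_cont(1)[OF sv] ab]) (use pos in auto)
    ultimately show ?thesis by (simp add: W_def Ub mult_nonpos_nonneg)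
  qed
  ultimately show False by simp
qed

lemma const_sign:
  fixes f :: "real \<Rightarrow> real"
  assumes c: "continuous_on {a..b} f" and nz: "\<And>x. x \<in> {a<..<b} \<Longrightarrow> f x \<noteq> 0"
  shows "(\<forall>x\<in>{a<..<b}. f x > 0) \<or> (\<forall>x\<in>{a<..<b}. f x < 0)"
proof (rule ccontr)
  assume "\<not> ?thesis"
  then obtain y x where y: "y \<in> {a<..<b}" "\<not> f y > 0" and x: "x \<in> {a<..<b}" "\<not> f x < 0"
    by blast
  then have xy: "x \<in> {a<..<b}" "y \<in> {a<..<b}" "f x > 0" "f y < 0"
    using nz[of x] nz[of y] by auto
  show False
  proof (cases "x \<le> y")
    case True
    have "continuous_on {x..y} f" by (rule continuous_on_subset[OF c]) (use xy in auto)
    then obtain z where "x \<le> z" "z \<le> y" "f z = 0" using IVT2'[of f y 0 x] xy True by auto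
    then show False using nz xy by auto
  next
    case False
    have "continuous_on {y..x} f" by (rule continuous_on_subset[OF c]) (use xy in auto)
    then obtain z where "y \<le> z" "z \<le> x" "f z = 0" using IVT'[of f y 0 x] xy False by auto
    then show False using nz xy by auto
  qed
qed

lemma sturm:
  assumes L: "0 < L" and su: "sol (\<lambda>x. q x + l) L u u1" and sv: "sol (\<lambda>x. q x + m) L v v1"
    and lm: "l < m" and ab: "0 \<le> a" "a < b" "b \<le> L" and ua: "u a = 0" and ub: "u b = 0"
    and nz: "\<And>x. x \<in> {a<..<b} \<Longrightarrow> u x \<noteq> 0"
  shows "\<exists>c\<in>{a<..<b}. v c = 0"
proof (rule ccontr)
  assume "\<not> ?thesis"
  then have nzv: "\<And>x. x \<in> {a<..<b} \<Longrightarrow> v x \<noteq> 0" by auto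
  have cu: "continuous_on {a..b} u" by (rule continuous_on_subset[OF sol_cont(1)[OF su]]) (use ab in auto)
  have cv: "continuous_on {a..b} v" by (rule continuous_on_subset[OF sol_cont(1)[OF sv]]) (use ab in auto)
  obtain s :: real where s: "\<And>x. x \<in> {a<..<b} \<Longrightarrow> s * u x > 0"
  proof (cases "\<forall>x\<in>{a<..<b}. u x > 0")
    case True then show ?thesis using that[of 1] by auto
  next
    case False then have "\<forall>x\<in>{a<..<b}. u x < 0" using const_sign[OF cu nz] by blast
    then show ?thesis using that[of "-1"] by auto
  qed
  obtain t :: real where t: "\<And>x. x \<in> {a<..<b} \<Longrightarrow> t * v x > 0"
  proof (cases "\<forall>x\<in>{a<..<b}. v x > 0")
    case True then show ?thesis using that[of 1] by auto
  next
    case False then have "\<forall>x\<in>{a<..<b}. v x < 0" using const_sign[OF cv nzv] by blast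
    then show ?thesis using that[of "-1"] by auto
  qed
  show False
    by (rule sturm_pos[OF L sol_scale[OF su, of s] sol_scale[OF sv, of t] lm ab])
       (use ua ub s t in auto)
qed


lemma energy_growth:
  assumes s: "sol g L y y1" and M: "\<And>t. t \<in> {0..L} \<Longrightarrow> \<bar>g t\<bar> \<le> M"
    and y0: "y 0 = 0" and y10: "y1 0 = 1" and x: "x \<in> {0..L}"
  shows "(y x)\<^sup>2 + (y1 x)\<^sup>2 \<le> exp ((1 + M) * L)"
proof -
  define E where "E x = (y x)\<^sup>2 + (y1 x)\<^sup>2" for x
  have d: "\<And>t. t\<in>{0..L} \<Longrightarrow> (E has_real_derivative 2 * y t * y1 t * (1 - g t)) (at t within {0..L})"
    unfolding E_def[abs_def] using sol_energy[OF s] by blast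
  have M0: "0 \<le> M" using M[of 0] x by force
  have "E x \<le> (E 0 + 0 * (x - 0)) * exp ((1+M) * (x - 0))"
  proof (rule gronwall_fwd[OF d])
    fix t assume t: "t \<in> {0..L}"
    have "\<bar>2 * y t * y1 t * (1 - g t)\<bar> \<le> (1 + M) * E t" unfolding E_def by (rule energy_bound[of g t M y y1, OF M[OF t]])
    then show "2 * y t * y1 t * (1 - g t) \<le> (1 + M) * E t + 0" by simp
  qed (use x M0 in auto)
  also have "\<dots> \<le> exp ((1+M) * L)" using x M0 by (simp add: E_def y0 y10 mult_left_mono)
  finally show ?thesis by (simp add: E_def)
qed

lemma abs_le_sq: "\<bar>y::real\<bar> \<le> 1 + y\<^sup>2"
proof -
  have "0 \<le> (\<bar>y\<bar> - 1/2)\<^sup>2" by simp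
  also have "\<dots> = y\<^sup>2 - \<bar>y\<bar> + 1/4" by (simp add: power2_diff power_divide)
  finally show ?thesis by simp
qed

lemma two_prod_le: "\<bar>2 * a * b\<bar> \<le> (a::real)\<^sup>2 + b\<^sup>2"
proof -
  have "0 \<le> (\<bar>a\<bar> - \<bar>b\<bar>)\<^sup>2" by simp
  also have "\<dots> = a\<^sup>2 + b\<^sup>2 - 2 * \<bar>a\<bar> * \<bar>b\<bar>" by (simp add: power2_diff)
  finally show ?thesis by (simp add: abs_mult)
qed

lemma param_lip:
  assumes su: "sol (\<lambda>x. q x + l1) L u u1" and sv: "sol (\<lambda>x. q x + l2) L v v1"
    and i0: "u 0 = v 0" and i1: "u1 0 = v1 0"
    and M: "\<And>t. t \<in> {0..L} \<Longrightarrow> \<bar>q t + l1\<bar> \<le> M"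
    and B: "\<And>t. t \<in> {0..L} \<Longrightarrow> (v t)\<^sup>2 \<le> B" and x: "x \<in> {0..L}"
  shows "(u x - v x)\<^sup>2 \<le> \<bar>l1 - l2\<bar> * B * L * exp ((1 + M + \<bar>l1 - l2\<bar>) * L)"
proof -
  define d where "d = l1 - l2"
  define w where "w x = u x - v x" for x
  define w1 where "w1 x = u1 x - v1 x" for x
  define E where "E x = (w x)\<^sup>2 + (w1 x)\<^sup>2" for x
  define E' where "E' t = 2 * w t * w1 t * (1 - (q t + l1)) - 2 * d * w1 t * v t" for t
  have dE: "(E has_real_derivative E' t) (at t within {0..L})" if t: "t \<in> {0..L}" for t
  proof -
    have a: "(u has_real_derivative u1 t) (at t within {0..L})" "(u1 has_real_derivative (- (q t + l1) * u t)) (at t within {0..L})"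
      "(v has_real_derivative v1 t) (at t within {0..L})" "(v1 has_real_derivative (- (q t + l2) * v t)) (at t within {0..L})"
      using su sv t by (auto simp: sol_def)
    have dw: "(w has_real_derivative w1 t) (at t within {0..L})"
      unfolding w_def[abs_def] w1_def using DERIV_diff[OF a(1) a(3)] .
    have dw1: "(w1 has_real_derivative (- (q t + l1) * w t - d * v t)) (at t within {0..L})"
      unfolding w1_def[abs_def] w_def d_def
      by (rule DERIV_cong[OF DERIV_diff[OF a(2) a(4)]]) (simp add: algebra_simps)
    show ?thesis unfolding E_def[abs_def] power2_eq_square
      by (rule DERIV_cong[OF DERIV_add[OF DERIV_mult[OF dw dw] DERIV_mult[OF dw1 dw1]]])
         (simp add: E'_def algebra_simps)
  qed
  have M0: "0 \<le> M" using M[of 0] x by force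
  have B0: "0 \<le> B" using B[of 0] x by (meson atLeastAtMost_iff order.trans zero_le_power2 order_refl x)
  have le: "E' t \<le> (1 + M + \<bar>d\<bar>) * E t + \<bar>d\<bar> * B" if t: "t \<in> {0..L}" for t
  proof -
    have 1: "\<bar>2 * w t * w1 t * (1 - (q t + l1))\<bar> \<le> (1 + M) * E t"
      unfolding E_def by (rule energy_bound[of "\<lambda>t. q t + l1" t M w w1, OF M[OF t]])
    have "\<bar>2 * d * w1 t * v t\<bar> = \<bar>d\<bar> * \<bar>2 * w1 t * v t\<bar>" by (simp add: abs_mult)
    also have "\<dots> \<le> \<bar>d\<bar> * ((w1 t)\<^sup>2 + (v t)\<^sup>2)" by (intro mult_left_mono two_prod_le) auto
    also have "\<dots> \<le> \<bar>d\<bar> * (E t + B)"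
    proof -
      have "(w1 t)\<^sup>2 + (v t)\<^sup>2 \<le> E t + B" using B[OF t] zero_le_power2[of "w t"] unfolding E_def by linarith
      then show ?thesis by (intro mult_left_mono) auto
    qed
    finally have 2: "\<bar>2 * d * w1 t * v t\<bar> \<le> \<bar>d\<bar> * E t + \<bar>d\<bar> * B" by (simp add: algebra_simps)
    have "E' t \<le> \<bar>2 * w t * w1 t * (1 - (q t + l1))\<bar> + \<bar>2 * d * w1 t * v t\<bar>"
      unfolding E'_def by linarith
    also have "\<dots> \<le> (1 + M) * E t + (\<bar>d\<bar> * E t + \<bar>d\<bar> * B)" using 1 2 by linarith
    finally show ?thesis by (simp add: algebra_simps)
  qed
  have "E x \<le> (E 0 + \<bar>d\<bar> * B * (x - 0)) * exp ((1 + M + \<bar>d\<bar>) * (x - 0))"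
    by (rule gronwall_fwd[OF dE le]) (use x M0 B0 in auto)
  also have "\<dots> = \<bar>d\<bar> * B * x * exp ((1 + M + \<bar>d\<bar>) * x)"
    by (simp add: E_def w_def w1_def i0 i1)
  also have "\<dots> \<le> \<bar>d\<bar> * B * L * exp ((1 + M + \<bar>d\<bar>) * L)"
  proof -
    have "(1 + M + \<bar>d\<bar>) * x \<le> (1 + M + \<bar>d\<bar>) * L" using x M0 by (intro mult_left_mono) auto
    then have "exp ((1 + M + \<bar>d\<bar>) * x) \<le> exp ((1 + M + \<bar>d\<bar>) * L)" by simp
    moreover have "\<bar>d\<bar> * B * x \<le> \<bar>d\<bar> * B * L" using x B0 by (intro mult_left_mono) auto
    ultimately show ?thesis using x B0 by (intro mult_mono) auto
  qed
  finally have "E x \<le> \<bar>d\<bar> * B * L * exp ((1 + M + \<bar>d\<bar>) * L)" .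
  moreover have "(u x - v x)\<^sup>2 \<le> E x" by (simp add: E_def w_def)
  ultimately show ?thesis by (simp add: d_def)
qed

lemma near_zero_pos:
  assumes s: "sol g L y y1" and M: "\<And>t. t \<in> {0..L} \<Longrightarrow> \<bar>g t\<bar> \<le> M"
    and Bh: "\<And>t. t \<in> {0..L} \<Longrightarrow> \<bar>y t\<bar> \<le> Bh"
    and y0: "y 0 = 0" and y10: "y1 0 = 1" and x: "0 < x" "x \<le> L" and small: "2 * M * Bh * x \<le> 1"
  shows "y x \<ge> x / 2"
proof -
  have M0: "0 \<le> M" using M[of 0] x by force
  have B0: "0 \<le> Bh" using Bh[of 0] x by force
  have y1b: "y1 t \<ge> 1/2" if t: "t \<in> {0..x}" for t
  proof -
    have "norm (y1 t - y1 0) \<le> (M * Bh) * norm (t - 0)"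
    proof (rule field_differentiable_bound[where S="{0..L}" and f'="\<lambda>t. - g t * y t"])
      fix z assume z: "z \<in> {0..L}"
      show "(y1 has_field_derivative - g z * y z) (at z within {0..L})" using s z by (auto simp: sol_def)
      have "\<bar>g z\<bar> * \<bar>y z\<bar> \<le> M * Bh" using M[OF z] Bh[OF z] B0 by (intro mult_mono) auto
      then show "norm (- g z * y z) \<le> M * Bh" by (simp add: abs_mult)
    qed (use t x in auto)
    then have "\<bar>y1 t - 1\<bar> \<le> M * Bh * t" using t by (simp add: y10)
    moreover have "M * Bh * t \<le> M * Bh * x" using t M0 B0 by (intro mult_left_mono) auto
    ultimately show ?thesis using small by (simp add: abs_le_iff) 
  qed
  have "(\<lambda>t. y t - t / 2) 0 \<le> (\<lambda>t. y t - t / 2) x"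
  proof (rule mono_within[where L=L and G="\<lambda>t. y t - t / 2" and G'="\<lambda>t. y1 t - 1/2"])
    fix t assume t: "t \<in> {0..L}"
    have dy: "(y has_real_derivative y1 t) (at t within {0..L})" using s t by (auto simp: sol_def)
    show "((\<lambda>t. y t - t / 2) has_real_derivative y1 t - 1/2) (at t within {0..L})"
      using DERIV_diff[OF dy DERIV_cdivide[OF DERIV_ident, where c=2]] by simp
  next
    fix t assume "0 < t" "t < x"
    then show "0 \<le> y1 t - 1/2" using y1b[of t] by auto
  qed (use x in auto)
  then show ?thesis using y0 by simp
qed

lemma interior_zero:
  assumes s: "sol g L y y1" and nn: "\<And>t. t \<in> {0..L} \<Longrightarrow> y t \<ge> 0"
    and c: "0 < c" "c < L" and yc: "y c = 0"
  shows "y1 c = 0"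
proof -
  have eq: "at c within {0..L} = at c" using c by (intro at_within_Icc_at) auto
  have "(y has_real_derivative y1 c) (at c within {0..L})" using s c by (auto simp: sol_def)
  then have d: "DERIV y c :> y1 c" using eq by simp
  show ?thesis
  proof (rule DERIV_local_min[OF d])
    show "0 < min c (L - c)" using c by auto
    show "\<forall>z. \<bar>c - z\<bar> < min c (L - c) \<longrightarrow> y c \<le> y z"
      using nn yc by (auto simp: abs_less_iff)
  qed
qed

lemma zero_on_interval:
  assumes s: "sol g L u u1" and M: "\<And>t. t \<in> {0..L} \<Longrightarrow> \<bar>g t\<bar> \<le> M"
    and ab: "0 \<le> \<alpha>" "\<alpha> < \<beta>" "\<beta> \<le> L" and z: "\<And>x. x \<in> {\<alpha>..\<beta>} \<Longrightarrow> u x = 0"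
    and x: "x \<in> {0..L}"
  shows "u x = 0"
proof -
  define t where "t = (\<alpha> + \<beta>) / 2"
  have t: "\<alpha> < t" "t < \<beta>" using ab by (auto simp: t_def)
  have "DERIV (\<lambda>_. 0::real) t :> 0" by (rule DERIV_const)
  then have d0: "DERIV u t :> 0"
    by (rule has_field_derivative_transform_within_open[where S="{\<alpha><..<\<beta>}"]) (use t z in auto)
  have eq: "at t within {0..L} = at t" using t ab by (intro at_within_Icc_at) auto
  have "(u has_real_derivative u1 t) (at t within {0..L})" using s t ab by (auto simp: sol_def)
  then have d1: "DERIV u t :> u1 t" using eq by simp
  have "u1 t = 0" using DERIV_unique[OF d1 d0] .
  moreover have "u t = 0" using z t by auto
  ultimately show ?thesis using ode_unique[OF s M, of t x] t ab x by auto
qed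

lemma refl_image: "(\<lambda>x. L - x) ` {0..L} = {0..(L::real)}"
proof
  show "(\<lambda>x. L - x) ` {0..L} \<subseteq> {0..L}" by auto
  show "{0..L} \<subseteq> (\<lambda>x. L - x) ` {0..L}"
  proof
    fix y assume "y \<in> {0..L}"
    then show "y \<in> (\<lambda>x. L - x) ` {0..L}" by (intro image_eqI[of _ _ "L - y"]) auto
  qed
qed

lemma reflect_deriv:
  fixes u :: "real \<Rightarrow> real"
  assumes d: "(u has_real_derivative D) (at (L - x) within {0..L})"
  shows "((\<lambda>x. u (L - x)) has_real_derivative - D) (at x within {0..L})"
proof -
  have "(u has_real_derivative D) (at ((\<lambda>x. L - x) x) within ((\<lambda>x. L - x) ` {0..L}))"
    using d by (simp add: refl_image)
  moreover have "((\<lambda>x. L - x) has_real_derivative -1) (at x within {0..L})"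
    using DERIV_diff[OF DERIV_const DERIV_ident] by simp
  ultimately have "(u \<circ> (\<lambda>x. L - x) has_real_derivative D * -1) (at x within {0..L})"
    by (rule DERIV_image_chain)
  then show ?thesis by (simp add: o_def)
qed

lemma reflect_sol:
  assumes s: "sol g L u u1" and sym: "\<And>x. x \<in> {0..L} \<Longrightarrow> g (L - x) = g x"
  shows "sol g L (\<lambda>x. u (L - x)) (\<lambda>x. - u1 (L - x))"
  unfolding sol_def
proof
  fix x assume x: "x \<in> {0..L}"
  then have x': "L - x \<in> {0..L}" by auto
  have a: "(u has_real_derivative u1 (L - x)) (at (L - x) within {0..L})"
    "(u1 has_real_derivative (- g (L - x) * u (L - x))) (at (L - x) within {0..L})"
    using s x' by (auto simp: sol_def)
  have "((\<lambda>x. - u1 (L - x)) has_real_derivative - (- (- g (L - x) * u (L - x)))) (at x within {0..L})"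
    using DERIV_minus[OF reflect_deriv[OF a(2)]] .
  then show "((\<lambda>x. u (L - x)) has_real_derivative - u1 (L - x)) (at x within {0..L}) \<and>
        ((\<lambda>x. - u1 (L - x)) has_real_derivative - g x * u (L - x)) (at x within {0..L})"
    using reflect_deriv[OF a(1)] sym[OF x] by simp
qed

lemma pos_from_nozero:
  assumes s: "sol g L y y1" and y0: "y 0 = 0" and y10: "y1 0 = 1"
    and nz: "\<And>x. x \<in> {0<..L} \<Longrightarrow> y x \<noteq> 0" and x: "x \<in> {0<..L}"
  shows "y x > 0"
proof (rule ccontr)
  assume "\<not> y x > 0"
  then have neg: "y x < 0" using nz[OF x] by auto
  have "(y has_real_derivative 1) (at 0 within {0..L})" using s x y10 by (force simp: sol_def)
  then obtain e where e: "e > 0" "\<forall>h>0. 0 + h \<in> {0..L} \<longrightarrow> h < e \<longrightarrow> y 0 < y (0 + h)"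
    using has_real_derivative_pos_inc_right[of y 1 0 "{0..L}"] by force
  define h where "h = min (e/2) x"
  have h: "0 < h" "h \<le> x" "h < e" using e x by (auto simp: h_def min_def)
  then have yh: "y h > 0" using e x y0 by auto
  have "continuous_on {h..x} y"
    by (rule continuous_on_subset[OF sol_cont(1)[OF s]]) (use h x in auto)
  then obtain z where z: "h \<le> z" "z \<le> x" "y z = 0" using IVT2'[of y x 0 h] yh neg h by auto
  then show False using nz[of z] h x by auto
qed

lemma neg_coeff_pos:
  assumes L: "0 < L" and s: "sol g L y y1" and neg: "\<And>t. t \<in> {0..L} \<Longrightarrow> g t \<le> -1"
    and M: "\<And>t. t \<in> {0..L} \<Longrightarrow> \<bar>g t\<bar> \<le> M"
    and y0: "y 0 = 0" and y10: "y1 0 = 1" and x: "x \<in> {0<..L}"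
  shows "y x > 0"
proof (rule pos_from_nozero[OF s y0 y10 _ x])
  fix x assume x: "x \<in> {0<..L}"
  define E where "E t = y t * y1 t" for t
  define E' where "E' t = y1 t * y1 t + - g t * y t * y t" for t
  have dE: "(E has_real_derivative E' t) (at t within {0..L})" if t: "t \<in> {0..L}" for t
  proof -
    have a: "(y has_real_derivative y1 t) (at t within {0..L})" "(y1 has_real_derivative (- g t * y t)) (at t within {0..L})"
      using s t by (auto simp: sol_def)
    show ?thesis unfolding E_def[abs_def] E'_def using DERIV_mult[OF a(1) a(2)] .
  qed
  have pos: "E' t > 0" if t: "t \<in> {0..L}" for t
  proof -
    have nz: "\<not> (y t = 0 \<and> y1 t = 0)"
    proof
      assume "y t = 0 \<and> y1 t = 0"
      then have "y 0 = 0 \<and> y1 0 = 0" using ode_unique[OF s M t] L by auto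
      then show False using y10 by simp
    qed
    have "1 * (y t * y t) \<le> (- g t) * (y t * y t)" by (rule mult_right_mono) (use neg[OF t] in auto)
    then have 1: "- g t * y t * y t \<ge> y t * y t" by (simp add: mult.assoc)
    have "(y1 t)\<^sup>2 + (y t)\<^sup>2 > 0" using nz by (auto simp: sum_power2_gt_zero_iff)
    then have "y1 t * y1 t + y t * y t > 0" by (simp add: power2_eq_square)
    then show ?thesis unfolding E'_def using 1 by linarith
  qed
  have x0: "0 < x" using x by simp
  have dif: "E differentiable (at t)" if t: "0 < t" "t < x" for t
  proof -
    have eq: "at t within {0..L} = at t" using t x by (intro at_within_Icc_at) auto
    have "(E has_real_derivative E' t) (at t)" using dE[of t] t x eq by simp
    then show ?thesis by (auto simp: real_differentiable_def)
  qed
  have cE: "continuous_on {0..x} E"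
    by (rule continuous_on_subset[OF DERIV_continuous_on[OF dE]]) (use x in auto)
  obtain l z where z: "0 < z" "z < x" "DERIV E z :> l" "E x - E 0 = (x - 0) * l"
    using MVT[OF x0 cE dif] by blast
  have eq: "at z within {0..L} = at z" using z x by (intro at_within_Icc_at) auto
  have "DERIV E z :> E' z" using dE[of z] z x eq by simp
  then have "l = E' z" using DERIV_unique[OF z(3)] by simp
  then have "l > 0" using pos[of z] z x by auto
  moreover have "E 0 = 0" by (simp add: E_def y0)
  ultimately have "E x > 0" using z x0 by simp
  then show "y x \<noteq> 0" by (auto simp: E_def)
qed


lemma inv_sq_integrable: "(\<lambda>v::real. D / (1 + v\<^sup>2)) integrable_on UNIV"
proof -
  have "set_integrable lborel (einterval (-\<infinity>) \<infinity>) (\<lambda>x::real. inverse (1 + x^2))"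
    by (rule integrable_inverse_1_plus_square)
  then have "integrable lborel (\<lambda>x::real. inverse (1 + x^2))"
    by (simp add: set_integrable_def einterval_iff)
  then have "(\<lambda>x::real. inverse (1 + x^2)) integrable_on UNIV" by (rule integrable_on_lborel)
  then have "(\<lambda>x::real. D * inverse (1 + x^2)) integrable_on UNIV" by (rule integrable_on_mult_right)
  then show ?thesis by (simp add: divide_inverse)
qed

locale mu_setup =
  fixes mu mu' :: "real \<Rightarrow> real" and C \<gamma> :: real
  assumes mu_deriv: "\<And>y. (mu has_real_derivative mu' y) (at y)"
    and mu'_cont: "continuous_on UNIV mu'"
    and g1: "\<gamma> > 1" and C0: "C > 0"
    and decay: "\<And>y. \<bar>mu' y\<bar> \<le> C / (1 + \<bar>y\<bar> powr \<gamma>)"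
    and mu_int: "(\<lambda>v. mu (v\<^sup>2 / 2)) integrable_on UNIV"
begin

definition "Dom R = 4 * C * (1 + R)"

lemma decay1: "\<bar>mu' y\<bar> \<le> 2 * C / (1 + \<bar>y\<bar>)"
proof (cases "\<bar>y\<bar> \<ge> 1")
  case True
  have "\<bar>y\<bar> powr 1 \<le> \<bar>y\<bar> powr \<gamma>" using True g1 by (intro powr_mono) auto
  then have "\<bar>y\<bar> \<le> \<bar>y\<bar> powr \<gamma>" using True by simp
  then have "C / (1 + \<bar>y\<bar> powr \<gamma>) \<le> C / (1 + \<bar>y\<bar>)"
    using C0 by (intro divide_left_mono) (auto simp: add_pos_nonneg)
  also have "\<dots> \<le> 2 * C / (1 + \<bar>y\<bar>)" using C0 by (intro divide_right_mono) auto
  finally show ?thesis using decay[of y] by linarith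
next
  case False
  have "C / (1 + \<bar>y\<bar> powr \<gamma>) \<le> C / 1"
    using C0 by (intro divide_left_mono) (auto simp: add_pos_nonneg)
  also have "\<dots> = 2 * C / 2" by simp
  also have "\<dots> \<le> 2 * C / (1 + \<bar>y\<bar>)" using C0 False by (intro divide_left_mono) auto
  finally show ?thesis using decay[of y] by linarith
qed

lemma dom: assumes "\<bar>s\<bar> \<le> R" shows "\<bar>mu' (v\<^sup>2 / 2 + s)\<bar> \<le> Dom R / (1 + v\<^sup>2)"
proof -
  define y where "y = v\<^sup>2 / 2 + s"
  have R0: "0 \<le> R" using assms by linarith
  have "\<bar>y\<bar> \<ge> v\<^sup>2 / 2 - R" using assms by (simp add: y_def)
  moreover have "R * \<bar>y\<bar> \<ge> 0" using R0 by simp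
  ultimately have key: "1 + v\<^sup>2 \<le> 2 * (1 + R) * (1 + \<bar>y\<bar>)" by (simp add: algebra_simps)
  have "\<bar>mu' y\<bar> \<le> 2 * C / (1 + \<bar>y\<bar>)" by (rule decay1)
  also have "\<dots> \<le> Dom R / (1 + v\<^sup>2)"
  proof -
    have p: "0 < 1 + \<bar>y\<bar>" "0 < 1 + v\<^sup>2" by (auto simp: add_pos_nonneg)
    have "2 * C * (1 + v\<^sup>2) \<le> 2 * C * (2 * (1 + R) * (1 + \<bar>y\<bar>))"
      using key C0 by (intro mult_left_mono) auto
    then show ?thesis using p by (simp add: Dom_def divide_simps algebra_simps)
  qed
  finally show ?thesis by (simp add: y_def)
qed

lemma Dom_nonneg: "0 \<le> R \<Longrightarrow> 0 \<le> Dom R" using C0 by (simp add: Dom_def)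

lemma mu_cont: "continuous_on UNIV mu"
  using mu_deriv by (intro DERIV_continuous_on) (auto intro: has_field_derivative_at_within)

lemma meas_cont:
  assumes "continuous_on UNIV f"
  shows "(f :: real \<Rightarrow> real) \<in> borel_measurable (lebesgue_on UNIV)"
  using continuous_imp_measurable_on_sets_lebesgue[OF assms] by simp

lemma Q_integrable: "(\<lambda>v. mu' (v\<^sup>2 / 2 + s)) integrable_on UNIV"
proof (rule measurable_bounded_by_integrable_imp_integrable_real[where g="\<lambda>v. Dom \<bar>s\<bar> / (1 + v\<^sup>2)"])
  show "(\<lambda>v. mu' (v\<^sup>2 / 2 + s)) \<in> borel_measurable (lebesgue_on UNIV)"
    by (rule meas_cont) (intro continuous_on_compose2[OF mu'_cont] continuous_intros, auto)
qed (auto intro: inv_sq_integrable dom)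

lemma mu_lip:
  assumes s: "\<bar>s\<bar> \<le> R" and t: "\<bar>t\<bar> \<le> R"
  shows "\<bar>mu (v\<^sup>2 / 2 + s) - mu (v\<^sup>2 / 2 + t)\<bar> \<le> Dom R / (1 + v\<^sup>2) * \<bar>s - t\<bar>"
proof -
  have "norm (mu (v\<^sup>2 / 2 + s) - mu (v\<^sup>2 / 2 + t)) \<le> Dom R / (1 + v\<^sup>2) * norm ((v\<^sup>2 / 2 + s) - (v\<^sup>2 / 2 + t))"
  proof (rule field_differentiable_bound[where S="{v\<^sup>2/2 - R .. v\<^sup>2/2 + R}" and f'=mu'])
    fix z assume z: "z \<in> {v\<^sup>2/2 - R .. v\<^sup>2/2 + R}"
    show "(mu has_field_derivative mu' z) (at z within {v\<^sup>2/2 - R .. v\<^sup>2/2 + R})"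
      using mu_deriv by (rule has_field_derivative_at_within)
    have "\<bar>z - v\<^sup>2/2\<bar> \<le> R" using z by auto
    then have "\<bar>mu' (v\<^sup>2 / 2 + (z - v\<^sup>2/2))\<bar> \<le> Dom R / (1 + v\<^sup>2)" by (rule dom)
    then show "norm (mu' z) \<le> Dom R / (1 + v\<^sup>2)" by simp
  qed (use s t in auto)
  then show ?thesis by simp
qed

lemma N_integrable: "(\<lambda>v. mu (v\<^sup>2 / 2 + s)) integrable_on UNIV"
proof -
  have h: "(\<lambda>v. mu (v\<^sup>2 / 2 + s) - mu (v\<^sup>2 / 2 + 0)) integrable_on UNIV"
  proof (rule measurable_bounded_by_integrable_imp_integrable_real[where g="\<lambda>v. Dom \<bar>s\<bar> * \<bar>s\<bar> / (1 + v\<^sup>2)"])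
    show "(\<lambda>v. mu (v\<^sup>2 / 2 + s) - mu (v\<^sup>2 / 2 + 0)) \<in> borel_measurable (lebesgue_on UNIV)"
      by (rule meas_cont) (intro continuous_intros continuous_on_compose2[OF mu_cont], auto)
    show "\<bar>mu (v\<^sup>2 / 2 + s) - mu (v\<^sup>2 / 2 + 0)\<bar> \<le> Dom \<bar>s\<bar> * \<bar>s\<bar> / (1 + v\<^sup>2)" for v
      using mu_lip[of s "\<bar>s\<bar>" 0 v] by simp
  qed (auto intro: inv_sq_integrable)
  have "(\<lambda>v. (mu (v\<^sup>2 / 2 + s) - mu (v\<^sup>2 / 2 + 0)) + mu (v\<^sup>2 / 2)) integrable_on UNIV"
    by (rule integrable_add[OF h mu_int])
  then show ?thesis by simp
qed

definition "Q s = integral UNIV (\<lambda>v. mu' (v\<^sup>2 / 2 + s))"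
definition "N s = integral UNIV (\<lambda>v. mu (v\<^sup>2 / 2 + s))"

lemma Q_cont: "isCont Q s"
  unfolding continuous_at_sequentially comp_def
proof (intro allI impI)
  fix X assume X: "X \<longlonglongrightarrow> s"
  obtain K where K: "K > 0" "\<And>n. norm (X n) \<le> K"
    using convergent_imp_Bseq[OF convergentI[OF X]] by (auto elim: BseqE)
  have "(\<lambda>n. integral UNIV (\<lambda>v. mu' (v\<^sup>2 / 2 + X n))) \<longlonglongrightarrow> integral UNIV (\<lambda>v. mu' (v\<^sup>2 / 2 + s))"
  proof (rule dominated_convergence(2)[where h="\<lambda>v. Dom K / (1 + v\<^sup>2)"])
    show "(\<lambda>v. mu' (v\<^sup>2 / 2 + X n)) integrable_on UNIV" for n by (rule Q_integrable)
    show "(\<lambda>v. Dom K / (1 + v\<^sup>2)) integrable_on UNIV" by (rule inv_sq_integrable)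
    show "norm (mu' (v\<^sup>2 / 2 + X n)) \<le> Dom K / (1 + v\<^sup>2)" for n v
      using dom[of "X n" K v] K by simp
    show "(\<lambda>n. mu' (v\<^sup>2 / 2 + X n)) \<longlonglongrightarrow> mu' (v\<^sup>2 / 2 + s)" for v
      using mu'_cont X by (intro continuous_on_tendsto_compose[OF mu'_cont] tendsto_intros) auto
  qed
  then show "(\<lambda>n. Q (X n)) \<longlonglongrightarrow> Q s" by (simp add: Q_def)
qed

lemma N_deriv: "(N has_real_derivative Q s) (at s)"
  unfolding DERIV_def tendsto_at_iff_sequentially comp_def
proof (intro allI impI)
  fix X :: "nat \<Rightarrow> real" assume X0: "\<forall>i. X i \<in> UNIV - {0}" and X: "X \<longlonglongrightarrow> 0"
  obtain K where K: "K > 0" "\<And>n. norm (X n) \<le> K"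
    using convergent_imp_Bseq[OF convergentI[OF X]] by (auto elim: BseqE)
  define R where "R = \<bar>s\<bar> + K"
  define f where "f n v = (mu (v\<^sup>2 / 2 + (s + X n)) - mu (v\<^sup>2 / 2 + s)) / X n" for n v
  have eq: "(N (s + X n) - N s) / X n = integral UNIV (f n)" for n
    unfolding N_def f_def
    by (simp add: integral_diff N_integrable)
  have "(\<lambda>n. integral UNIV (f n)) \<longlonglongrightarrow> integral UNIV (\<lambda>v. mu' (v\<^sup>2 / 2 + s))"
  proof (rule dominated_convergence(2)[where h="\<lambda>v. Dom R / (1 + v\<^sup>2)"])
    show "f n integrable_on UNIV" for n
      unfolding f_def by (intro integrable_on_divide integrable_diff N_integrable)
    show "(\<lambda>v. Dom R / (1 + v\<^sup>2)) integrable_on UNIV" by (rule inv_sq_integrable)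
    show "norm (f n v) \<le> Dom R / (1 + v\<^sup>2)" for n v
    proof -
      have a: "\<bar>s + X n\<bar> \<le> R" "\<bar>s\<bar> \<le> R" using K(2)[of n] K(1) by (auto simp: R_def)
      have xn: "\<bar>X n\<bar> > 0" using X0 by auto
      have "\<bar>mu (v\<^sup>2 / 2 + (s + X n)) - mu (v\<^sup>2 / 2 + s)\<bar> \<le> Dom R / (1 + v\<^sup>2) * \<bar>X n\<bar>"
        using mu_lip[OF a, of v] by simp
      then show ?thesis using xn by (simp add: f_def abs_divide divide_le_eq)
    qed
    show "(\<lambda>n. f n v) \<longlonglongrightarrow> mu' (v\<^sup>2 / 2 + s)" for v
    proof -
      have "((\<lambda>h. (mu (v\<^sup>2 / 2 + s + h) - mu (v\<^sup>2 / 2 + s)) / h) \<longlongrightarrow> mu' (v\<^sup>2 / 2 + s)) (at 0)"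
        using mu_deriv[of "v\<^sup>2 / 2 + s"] unfolding DERIV_def .
      then have "(\<lambda>n. (mu (v\<^sup>2 / 2 + s + X n) - mu (v\<^sup>2 / 2 + s)) / X n) \<longlonglongrightarrow> mu' (v\<^sup>2 / 2 + s)"
        unfolding tendsto_at_iff_sequentially comp_def using X0 X by blast
      then show ?thesis by (simp add: f_def add.assoc)
    qed
  qed
  then show "(\<lambda>n. (N (s + X n) - N s) / X n) \<longlonglongrightarrow> Q s" by (simp add: eq Q_def)
qed

end


theorem mainTheorem5:
  fixes mu mu' :: "real \<Rightarrow> real"
    and phi phi' phi'' :: "real \<Rightarrow> real"
    and P :: real
    and q :: "real \<Rightarrow> real"
  assumes mu_deriv: "\<And>y. (mu has_real_derivative mu' y) (at y)"
    and mu'_cont: "continuous_on UNIV mu'"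
    and mu_nonneg: "\<And>y. mu y \<ge> 0"
    and mu_norm: "((\<lambda>v. mu (v\<^sup>2 / 2)) has_integral 1) UNIV"
    and mu'_decay: "\<exists>\<gamma> C. \<gamma> > 1 \<and> C > 0 \<and>
                      (\<forall>y. \<bar>mu' y\<bar> \<le> C / (1 + \<bar>y\<bar> powr \<gamma>))"
    and phi_deriv: "\<And>x. (phi has_real_derivative phi' x) (at x)"
    and phi'_deriv: "\<And>x. (phi' has_real_derivative phi'' x) (at x)"
    and phi_eq: "\<And>x. phi'' x = 1 - integral UNIV (\<lambda>v. mu (v\<^sup>2 / 2 + phi x))"
    and phi_nonconst: "\<not> (\<exists>c. \<forall>x. phi x = c)"
    and P_pos: "P > 0"
    and P_period: "\<And>x. phi (x + P) = phi x"
    and P_minimal: "\<And>p. 0 < p \<Longrightarrow> p < P \<Longrightarrow> \<not> (\<forall>x. phi (x + p) = phi x)"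
    and phi_max: "\<And>x. phi x \<le> phi 0"
    and phi_P: "phi P = phi 0"
    and phi_min: "\<And>x. phi (P / 2) \<le> phi x"
    and phi_sym: "\<And>x. x \<in> {0..P} \<Longrightarrow> phi x = phi (P - x)"
    and phi_decr: "\<And>x y. x \<in> {0..P/2} \<Longrightarrow> y \<in> {0..P/2} \<Longrightarrow> x < y \<Longrightarrow> phi y < phi x"
    and q_def: "\<And>x. q x = integral UNIV (\<lambda>v. mu' (v\<^sup>2 / 2 + phi x))"
  shows "sl_dirichlet_eigenfunction q P 0 phi'
       \<and> card {l. sl_dirichlet_eigenvalue q P l \<and> l < 0} = 1
       \<and> (\<exists>l0. sl_dirichlet_eigenvalue q P l0
              \<and> (\<forall>l. sl_dirichlet_eigenvalue q P l \<longrightarrow> l0 \<le> l)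
              \<and> l0 < 0
              \<and> (\<forall>u0 u0'. sl_dirichlet_eigenfunction q P l0 u0
                   \<and> (\<forall>x\<in>{0..P}. (u0 has_real_derivative u0' x) (at x within {0..P}))
                   \<longrightarrow> (\<forall>x\<in>{0..P}. u0 x = u0 (P - x)
                         \<and> u0' (P - x) = - u0' x
                         \<and> u0 (P - x) * u0' (P - x) = - (u0 x * u0' x))))"
proof -
  obtain \<gamma> C where gC: "\<gamma> > 1" "C > 0" "\<And>y. \<bar>mu' y\<bar> \<le> C / (1 + \<bar>y\<bar> powr \<gamma>)"
    using mu'_decay by blast
  have mu_int: "(\<lambda>v. mu (v\<^sup>2 / 2)) integrable_on UNIV" using mu_norm by (rule has_integral_integrable)
  interpret M: mu_setup mu mu' C \<gamma>
  proof (unfold_locales)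
    show "\<And>y. (mu has_real_derivative mu' y) (at y)" by (rule mu_deriv)
    show "continuous_on UNIV mu'" by (rule mu'_cont)
    show "1 < \<gamma>" "0 < C" by (rule gC(1), rule gC(2))
    show "\<And>y. \<bar>mu' y\<bar> \<le> C / (1 + \<bar>y\<bar> powr \<gamma>)" by (rule gC(3))
    show "(\<lambda>v. mu (v\<^sup>2 / 2)) integrable_on UNIV" by (rule mu_int)
  qed
  have qQ: "\<And>x. q x = M.Q (phi x)" by (simp add: q_def M.Q_def)
  have phiN: "\<And>x. phi'' x = 1 - M.N (phi x)" by (simp add: phi_eq M.N_def)
  have phi_isCont: "\<And>x. isCont phi x" using phi_deriv DERIV_isCont by blast
  have q_isCont: "\<And>x. isCont q x"
  proof -
    fix x
    have "isCont (\<lambda>x. M.Q (phi x)) x" by (rule isCont_o2[OF phi_isCont M.Q_cont])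
    then show "isCont q x" by (simp add: qQ[abs_def])
  qed
  have qc: "continuous_on {0..P} q" by (intro continuous_at_imp_continuous_on ballI q_isCont)
  have "bounded (q ` {0..P})" by (intro compact_imp_bounded compact_continuous_image qc) auto
  then obtain Mq0 where "\<forall>y\<in>q ` {0..P}. \<bar>y\<bar> \<le> Mq0" unfolding bounded_real by blast
  then have Mq0: "\<And>x. x\<in>{0..P} \<Longrightarrow> \<bar>q x\<bar> \<le> Mq0" by blast
  define Mq where "Mq = \<bar>Mq0\<bar>"
  have Mq: "\<bar>q x\<bar> \<le> Mq" if x: "x\<in>{0..P}" for x
  proof -
    have "\<bar>q x\<bar> \<le> Mq0" by (rule Mq0[OF x])
    also have "Mq0 \<le> Mq" by (simp add: Mq_def)
    finally show ?thesis .
  qed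
  have Mq_nn: "0 \<le> Mq" by (simp add: Mq_def)
  have q_sym: "q (P - x) = q x" if "x\<in>{0..P}" for x
  proof -
    have "phi (P - x) = phi x" using phi_sym[OF that] by simp
    then show ?thesis by (simp add: qQ)
  qed
  have d3: "(phi'' has_real_derivative (- (q x + 0) * phi' x)) (at x)" for x
  proof -
    have "((\<lambda>x. M.N (phi x)) has_real_derivative M.Q (phi x) * phi' x) (at x)"
      by (rule DERIV_chain2[OF M.N_deriv phi_deriv])
    then have "((\<lambda>x. 1 - M.N (phi x)) has_real_derivative 0 - M.Q (phi x) * phi' x) (at x)"
      by (rule DERIV_diff[OF DERIV_const])
    moreover have "phi'' = (\<lambda>x. 1 - M.N (phi x))" by (rule ext) (rule phiN)
    ultimately show ?thesis by (simp add: qQ)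
  qed
  have solphi: "sol (\<lambda>x. q x + 0) P phi' phi''"
    unfolding sol_def using phi'_deriv d3 by (auto intro: has_field_derivative_at_within)
  have gb0: "\<And>t. t \<in> {0..P} \<Longrightarrow> \<bar>q t + 0\<bar> \<le> Mq" using Mq by simp
  have p0: "phi' 0 = 0"
    by (rule DERIV_local_max[OF phi_deriv zero_less_one]) (use phi_max in auto)
  have pP: "phi' P = 0"
    by (rule DERIV_local_max[OF phi_deriv zero_less_one]) (use phi_max phi_P in auto)
  have pmid: "phi' (P/2) = 0"
    by (rule DERIV_local_min[OF phi_deriv zero_less_one]) (use phi_min in auto)
  obtain z0 where z0: "0 < z0" "z0 < P/2" "phi' z0 < 0"
  proof -
    have "continuous_on {0..P/2} phi" by (intro continuous_at_imp_continuous_on ballI phi_isCont)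
    moreover have "\<And>x. 0 < x \<Longrightarrow> x < P/2 \<Longrightarrow> phi differentiable (at x)"
      using phi_deriv real_differentiable_def by blast
    ultimately obtain l z where z: "0 < z" "z < P/2" "DERIV phi z :> l" "phi (P/2) - phi 0 = (P/2 - 0) * l"
      using MVT[of 0 "P/2" phi] P_pos by auto
    have "phi (P/2) < phi 0" using phi_decr[of 0 "P/2"] P_pos by auto
    then have "(P/2 - 0) * l < 0" using z(4) by linarith
    then have "l < 0" using P_pos by (simp add: mult_less_0_iff)
    moreover have "phi' z = l" using DERIV_unique[OF phi_deriv z(3)] .
    ultimately show ?thesis using that z by auto
  qed
  have phi'_nz: "\<not> (\<forall>x\<in>{0..P}. phi' x = 0)" using z0 by force
  have phi_incr: "\<And>x y. x \<in> {P/2..P} \<Longrightarrow> y \<in> {P/2..P} \<Longrightarrow> x < y \<Longrightarrow> phi x < phi y"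
  proof -
    fix x y assume xy: "x \<in> {P/2..P}" "y \<in> {P/2..P}" "x < y"
    have "phi (P - x) < phi (P - y)" using xy P_pos by (intro phi_decr) auto
    then show "phi x < phi y" using phi_sym[of x] phi_sym[of y] xy P_pos by auto
  qed
  have phi'_zero: "c = P/2" if c: "c \<in> {0<..<P}" "phi' c = 0" for c
  proof (rule ccontr)
    assume ne: "c \<noteq> P/2"
    have d2c: "DERIV phi' c :> phi'' c" by (rule phi'_deriv)
    have "phi'' c = 0"
    proof (cases "c < P/2")
      case True
      have nonpos: "phi' t \<le> 0" if t: "0 < t" "t < P/2" for t
      proof (rule ccontr)
        assume "\<not> phi' t \<le> 0"
        then obtain d where d: "d > 0" "\<forall>h>0. h < d \<longrightarrow> phi t < phi (t + h)"
          using DERIV_pos_inc_right[OF phi_deriv[of t]] by force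
        define h where "h = min (d/2) (P/2 - t)"
        have h: "0 < h" "h < d" "t + h \<le> P/2" using d t by (auto simp: h_def min_def)
        then have "phi (t + h) < phi t" using t by (intro phi_decr) auto
        moreover have "phi t < phi (t + h)" using d h by auto
        ultimately show False by simp
      qed
      show ?thesis
        by (rule DERIV_local_max[OF d2c, of "min c (P/2 - c)"]) (use True c nonpos in \<open>auto simp: abs_less_iff\<close>)
    next
      case False
      then have cg: "P/2 < c" using ne by auto
      have nonneg: "phi' t \<ge> 0" if t: "P/2 < t" "t < P" for t
      proof (rule ccontr)
        assume "\<not> phi' t \<ge> 0"
        then obtain d where d: "d > 0" "\<forall>h>0. h < d \<longrightarrow> phi t > phi (t + h)"
          using DERIV_neg_dec_right[OF phi_deriv[of t]] by force
        define h where "h = min (d/2) (P - t)"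
        have h: "0 < h" "h < d" "t + h \<le> P" using d t by (auto simp: h_def min_def)
        then have "phi t < phi (t + h)" using t by (intro phi_incr) auto
        moreover have "phi t > phi (t + h)" using d h by auto
        ultimately show False by simp
      qed
      show ?thesis
        by (rule DERIV_local_min[OF d2c, of "min (c - P/2) (P - c)"]) (use cg c nonneg in \<open>auto simp: abs_less_iff\<close>)
    qed
    then have "\<forall>x\<in>{0..P}. phi' x = 0" using ode_unique[OF solphi gb0, of c] c by auto
    then show False using phi'_nz by blast
  qed
  have eig_phi: "sl_dirichlet_eigenfunction q P 0 phi'"
    by (rule sol_eig[OF solphi p0 pP]) (use z0 P_pos in \<open>intro bexI[of _ z0], auto\<close>)

  have "\<forall>lam. \<exists>p. sol (\<lambda>x. q x + lam) P (fst p) (snd p) \<and> fst p 0 = 0 \<and> snd p 0 = 1"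
  proof
    fix lam
    have "continuous_on {0..P} (\<lambda>x. q x + lam)" by (intro continuous_intros qc)
    then obtain y y1 where "y 0 = 0" "y1 0 = 1" "\<forall>x\<in>{0..P}. (y has_real_derivative y1 x) (at x within {0..P})
          \<and> (y1 has_real_derivative (- (q x + lam) * y x)) (at x within {0..P})"
      using ode_exists[OF P_pos] by blast
    then show "\<exists>p. sol (\<lambda>x. q x + lam) P (fst p) (snd p) \<and> fst p 0 = 0 \<and> snd p 0 = 1"
      by (intro exI[of _ "(y, y1)"]) (simp add: sol_def)
  qed
  then obtain F where F: "\<And>lam. sol (\<lambda>x. q x + lam) P (fst (F lam)) (snd (F lam)) \<and> fst (F lam) 0 = 0 \<and> snd (F lam) 0 = 1"
    by metis
  define Y where "Y lam = fst (F lam)" for lam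
  define Y1 where "Y1 lam = snd (F lam)" for lam
  have Ys: "sol (\<lambda>x. q x + lam) P (Y lam) (Y1 lam)" for lam using F by (simp add: Y_def Y1_def)
  have Y0: "Y lam 0 = 0" for lam using F by (simp add: Y_def)
  have Y10: "Y1 lam 0 = 1" for lam using F by (simp add: Y1_def)
  define R where "R = Mq + 2"
  have R0: "0 \<le> R" using Mq_nn by (simp add: R_def)
  have gb: "\<bar>q t + lam\<bar> \<le> Mq + R" if "\<bar>lam\<bar> \<le> R" "t \<in> {0..P}" for lam t
    using Mq[OF that(2)] that(1) by linarith
  define BB where "BB = exp ((1 + (Mq + R)) * P)"
  have BB0: "0 \<le> BB" by (simp add: BB_def)
  have Yb: "(Y lam x)\<^sup>2 \<le> BB" if "\<bar>lam\<bar> \<le> R" "x \<in> {0..P}" for lam x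
  proof -
    have "(Y lam x)\<^sup>2 + (Y1 lam x)\<^sup>2 \<le> BB"
      unfolding BB_def by (rule energy_growth[OF Ys gb[OF that(1)] Y0 Y10 that(2)])
    then show ?thesis using zero_le_power2[of "Y1 lam x"] by linarith
  qed
  have Yb2: "\<bar>Y lam x\<bar> \<le> 1 + BB" if "\<bar>lam\<bar> \<le> R" "x \<in> {0..P}" for lam x
    using abs_le_sq[of "Y lam x"] Yb[OF that] by linarith
  define Kc where "Kc = BB * P * exp ((1 + (Mq + R) + 1) * P)"
  have Kc0: "0 \<le> Kc" using BB0 P_pos by (simp add: Kc_def)
  have lip: "(Y l1 x - Y l2 x)\<^sup>2 \<le> \<bar>l1 - l2\<bar> * Kc"
    if l: "\<bar>l1\<bar> \<le> R" "\<bar>l2\<bar> \<le> R" "\<bar>l1 - l2\<bar> \<le> 1" and x: "x \<in> {0..P}" for l1 l2 x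
  proof -
    have "(Y l1 x - Y l2 x)\<^sup>2 \<le> \<bar>l1 - l2\<bar> * BB * P * exp ((1 + (Mq + R) + \<bar>l1 - l2\<bar>) * P)"
      by (rule param_lip[OF Ys Ys]) (use Y0 Y10 gb[OF l(1)] Yb[OF l(2)] x in auto)
    also have "\<dots> \<le> \<bar>l1 - l2\<bar> * BB * P * exp ((1 + (Mq + R) + 1) * P)"
      using l P_pos BB0 by (intro mult_left_mono) (auto simp: mult_nonneg_nonneg)
    finally show ?thesis by (simp add: Kc_def mult.assoc)
  qed
  have phi''0: "phi'' 0 \<noteq> 0"
  proof
    assume "phi'' 0 = 0"
    then have "\<forall>x\<in>{0..P}. phi' x = 0" using ode_unique[OF solphi gb0, of 0] p0 P_pos by auto
    then show False using phi'_nz by blast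
  qed
  have Y0phi: "phi' x = phi'' 0 * Y 0 x" if x: "x \<in> {0..P}" for x
  proof -
    have s: "sol (\<lambda>x. q x + 0) P (\<lambda>x. 1 * phi' x + (- phi'' 0) * Y 0 x) (\<lambda>x. 1 * phi'' x + (- phi'' 0) * Y1 0 x)"
      by (rule sol_lin[OF solphi Ys])
    have "(\<lambda>x. 1 * phi' x + (- phi'' 0) * Y 0 x) x = 0"
      using ode_unique[OF s gb0, of 0 x] x P_pos by (simp add: p0 Y0 Y10)
    then show ?thesis by simp
  qed
  have Y0mid: "Y 0 (P/2) = 0" using Y0phi[of "P/2"] pmid phi''0 P_pos by simp

  (* the lowest eigenvalue via shooting *)
  define S where "S = {lam. lam \<le> 0 \<and> (\<forall>x\<in>{0<..P}. Y lam x > 0)}"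
  define lam0 where "lam0 = - (Mq + 1)"
  have lam0S: "lam0 \<in> S"
  proof -
    have "\<forall>x\<in>{0<..P}. Y lam0 x > 0"
    proof
      fix x assume x: "x \<in> {0<..P}"
      show "Y lam0 x > 0"
      proof (rule neg_coeff_pos[OF P_pos Ys _ _ Y0 Y10 x])
        fix t assume t: "t \<in> {0..P}"
        show "q t + lam0 \<le> -1" using Mq[OF t] by (simp add: lam0_def abs_le_iff)
        show "\<bar>q t + lam0\<bar> \<le> Mq + R" by (rule gb) (use t Mq_nn in \<open>auto simp: lam0_def R_def\<close>)
      qed
    qed
    then show ?thesis using Mq_nn by (simp add: S_def lam0_def)
  qed
  have Sne: "S \<noteq> {}" using lam0S by blast
  have Sbdd: "bdd_above S" by (rule bdd_aboveI[of _ 0]) (auto simp: S_def)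
  define ls where "ls = Sup S"
  have ls_le: "ls \<le> 0" unfolding ls_def by (rule cSup_least[OF Sne]) (auto simp: S_def)
  have ls_ge: "lam0 \<le> ls" unfolding ls_def by (rule cSup_upper[OF lam0S Sbdd])
  have lsR: "\<bar>ls\<bar> \<le> R" using ls_le ls_ge Mq_nn by (simp add: lam0_def R_def)
  have Yls_nn: "Y ls x \<ge> 0" if x: "x \<in> {0..P}" for x
  proof (rule ccontr)
    assume "\<not> Y ls x \<ge> 0"
    then have neg: "Y ls x < 0" by simp
    then have x0: "x \<in> {0<..P}" using x Y0[of ls] by (cases "x = 0") auto
    define e where "e = - Y ls x"
    have e0: "e > 0" using neg by (simp add: e_def)
    define eta where "eta = min 1 (e\<^sup>2 / (Kc + 1))"
    have eta0: "eta > 0" using e0 Kc0 by (simp add: eta_def)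
    have "ls - eta < Sup S" using eta0 by (simp add: ls_def)
    then obtain s where s: "s \<in> S" "ls - eta < s" using less_cSup_iff[OF Sne Sbdd] by blast
    have sle: "s \<le> ls" unfolding ls_def by (rule cSup_upper[OF s(1) Sbdd])
    have seta: "\<bar>s - ls\<bar> \<le> eta" using s sle by simp
    have eta1: "eta \<le> 1" by (simp add: eta_def)
    have sR: "\<bar>s\<bar> \<le> R" using s(2) sle ls_ge eta1 ls_le Mq_nn by (simp add: lam0_def R_def abs_le_iff)
    have pos: "Y s x > 0" using s(1) x0 by (simp add: S_def)
    have "(Y s x - Y ls x)\<^sup>2 \<le> \<bar>s - ls\<bar> * Kc" by (rule lip[OF sR lsR _ x]) (use seta eta1 in auto)
    also have "\<dots> \<le> eta * Kc" using seta Kc0 by (intro mult_right_mono) auto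
    also have "\<dots> \<le> e\<^sup>2 / (Kc + 1) * Kc" using Kc0 by (intro mult_right_mono) (auto simp: eta_def)
    also have "\<dots> \<le> e\<^sup>2"
    proof -
      have "e\<^sup>2 / (Kc + 1) * Kc = e\<^sup>2 * (Kc / (Kc + 1))" by simp
      also have "\<dots> \<le> e\<^sup>2 * 1" using Kc0 by (intro mult_left_mono) auto
      finally show ?thesis by simp
    qed
    finally have 1: "(Y s x - Y ls x)\<^sup>2 \<le> e\<^sup>2" .
    have "e < Y s x - Y ls x" using pos by (simp add: e_def)
    then have "e\<^sup>2 < (Y s x - Y ls x)\<^sup>2" using e0 by (intro power_strict_mono) auto
    then show False using 1 by simp
  qed
  have Yls_pos: "Y ls x > 0" if x: "x \<in> {0<..<P}" for x
  proof (rule ccontr)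
    assume "\<not> Y ls x > 0"
    then have "Y ls x = 0" using Yls_nn[of x] x by auto
    then have "Y1 ls x = 0" using interior_zero[OF Ys Yls_nn, of x] x by auto
    then have "Y1 ls 0 = 0" using ode_unique[OF Ys gb[OF lsR], of x 0] x \<open>Y ls x = 0\<close> P_pos by auto
    then show False using Y10 by simp
  qed
  have ls_neg: "ls < 0"
  proof (rule ccontr)
    assume "\<not> ls < 0"
    then have "ls = 0" using ls_le by simp
    then show False using Yls_pos[of "P/2"] Y0mid P_pos by simp
  qed

  have YlsP: "Y ls P = 0"
  proof (rule ccontr)
    assume "Y ls P \<noteq> 0"
    then have YP: "Y ls P > 0" using Yls_nn[of P] P_pos by auto
    have Ypos: "Y ls x > 0" if "x \<in> {0<..P}" for x
      using Yls_pos[of x] YP that by (cases "x = P") auto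
    define d0 where "d0 = min P (1 / (2 * (Mq + R) * (1 + BB) + 1))"
    have MRB: "0 \<le> 2 * (Mq + R) * (1 + BB)" using Mq_nn R0 BB0 by simp
    have d0: "0 < d0" "d0 \<le> P" using P_pos MRB by (auto simp: d0_def)
    have near: "Y lam x > 0" if lam: "\<bar>lam\<bar> \<le> R" and x: "0 < x" "x \<le> d0" for lam x
    proof -
      have "(2 * (Mq + R) * (1 + BB) + 1) * x \<le> (2 * (Mq + R) * (1 + BB) + 1) * (1 / (2 * (Mq + R) * (1 + BB) + 1))"
        using x MRB by (intro mult_left_mono) (auto simp: d0_def)
      also have "\<dots> = 1" using MRB by simp
      finally have sm: "2 * (Mq + R) * (1 + BB) * x \<le> 1" using x by (simp add: algebra_simps)
      have "Y lam x \<ge> x / 2"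
        by (rule near_zero_pos[OF Ys gb[OF lam] Yb2[OF lam] Y0 Y10 x(1) _ sm]) (use x d0 in auto)
      then show ?thesis using x by simp
    qed
    have cY: "continuous_on {d0..P} (Y ls)"
      by (rule continuous_on_subset[OF sol_cont(1)[OF Ys]]) (use d0 in auto)
    obtain xm where xm: "xm \<in> {d0..P}" "\<And>y. y \<in> {d0..P} \<Longrightarrow> Y ls xm \<le> Y ls y"
      using continuous_attains_inf[OF compact_Icc _ cY] d0 by auto
    define m where "m = Y ls xm"
    have m0: "m > 0" using Ypos[of xm] xm d0 by (simp add: m_def)
    define eta where "eta = min (- ls) (min 1 (m\<^sup>2 / (2 * (Kc + 1))))"
    have eta0: "eta > 0" using ls_neg m0 Kc0 by (simp add: eta_def)
    define l' where "l' = ls + eta"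
    have l'0: "l' \<le> 0" by (simp add: l'_def eta_def)
    have eta1: "eta \<le> 1" by (simp add: eta_def)
    have l'R: "\<bar>l'\<bar> \<le> R" using l'0 eta0 lsR by (simp add: l'_def abs_le_iff)
    have "l' \<in> S"
    proof -
      have "Y l' x > 0" if x: "x \<in> {0<..P}" for x
      proof (cases "x \<le> d0")
        case True
        then show ?thesis using near[OF l'R] x by auto
      next
        case False
        then have xd: "x \<in> {d0..P}" using x by auto
        have "(Y l' x - Y ls x)\<^sup>2 \<le> \<bar>l' - ls\<bar> * Kc"
          by (rule lip[OF l'R lsR]) (use eta0 eta1 xd d0 in \<open>auto simp: l'_def\<close>)
        also have "\<dots> = eta * Kc" using eta0 by (simp add: l'_def)
        also have "\<dots> \<le> m\<^sup>2 / (2 * (Kc + 1)) * Kc" using Kc0 by (intro mult_right_mono) (auto simp: eta_def)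
        also have "\<dots> < m\<^sup>2"
        proof -
          have "m\<^sup>2 / (2 * (Kc + 1)) * Kc = m\<^sup>2 * (Kc / (2 * (Kc + 1)))" by simp
          also have "\<dots> < m\<^sup>2 * 1" using Kc0 m0 by (intro mult_strict_left_mono) auto
          finally show ?thesis by simp
        qed
        finally have "(Y l' x - Y ls x)\<^sup>2 < m\<^sup>2" .
        then have "\<bar>Y l' x - Y ls x\<bar> < m" using m0 by (metis abs_ge_zero power2_abs power2_less_imp_less less_le)
        moreover have "m \<le> Y ls x" using xm(2)[OF xd] by (simp add: m_def)
        ultimately show ?thesis by (simp add: abs_less_iff)
      qed
      then show ?thesis using l'0 by (simp add: S_def)
    qed
    then have "l' \<le> ls" unfolding ls_def by (rule cSup_upper[OF _ Sbdd])
    then show False using eta0 by (simp add: l'_def)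
  qed

  have Yls_mid: "Y ls (P/2) \<noteq> 0" using Yls_pos[of "P/2"] P_pos by simp
  have eig_ls: "sl_dirichlet_eigenfunction q P ls (Y ls)"
    by (rule sol_eig[OF Ys Y0 YlsP]) (use Yls_mid P_pos in \<open>intro bexI[of _ "P/2"], auto\<close>)
  have ev_ls: "sl_dirichlet_eigenvalue q P ls" using eig_ls by (auto simp: sl_dirichlet_eigenvalue_def)
  have eigdata: "\<exists>u1. sol (\<lambda>x. q x + l) P u u1 \<and> u 0 = 0 \<and> u P = 0 \<and> (\<exists>x\<in>{0<..<P}. u x \<noteq> 0)"
    if e: "sl_dirichlet_eigenfunction q P l u" for l u
  proof -
    obtain u1 where su: "sol (\<lambda>x. q x + l) P u u1" using eig_sol[OF e] by blast
    have b: "u 0 = 0" "u P = 0" "\<exists>x\<in>{0..P}. u x \<noteq> 0" using e by (auto simp: sl_dirichlet_eigenfunction_def)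
    then obtain x where x: "x \<in> {0..P}" "u x \<noteq> 0" by blast
    then have "x \<in> {0<..<P}" using b by (cases "x = 0"; cases "x = P") auto
    then show ?thesis using su b x by blast
  qed
  have minimal: "ls \<le> l" if ev: "sl_dirichlet_eigenvalue q P l" for l
  proof (rule ccontr)
    assume "\<not> ls \<le> l"
    then have lt: "l < ls" by simp
    obtain u where e: "sl_dirichlet_eigenfunction q P l u" using ev by (auto simp: sl_dirichlet_eigenvalue_def)
    obtain u1 x1 where su: "sol (\<lambda>x. q x + l) P u u1" and b: "u 0 = 0" "u P = 0"
      and x1: "x1 \<in> {0<..<P}" "u x1 \<noteq> 0"
      using eigdata[OF e] by blast
    obtain a b' where ab: "0 \<le> a" "a < x1" "x1 < b'" "b' \<le> P" "u a = 0" "u b' = 0" "\<forall>x\<in>{a<..<b'}. u x \<noteq> 0"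
      using consec_zeros[OF sol_cont(1)[OF su] b, of x1] x1 by auto
    obtain c where c: "c \<in> {a<..<b'}" "Y ls c = 0"
      using sturm[OF P_pos su Ys lt ab(1) _ ab(4) ab(5) ab(6)] ab by auto
    then show False using Yls_pos[of c] ab by auto
  qed
  have interval_mid: "a < P/2 \<and> P/2 < b"
    if su: "sol (\<lambda>x. q x + l) P u u1" and l: "l < 0" and ab: "0 \<le> a" "a < b" "b \<le> P"
      and z: "u a = 0" "u b = 0" and nz: "\<forall>x\<in>{a<..<b}. u x \<noteq> 0" for l u u1 a b
  proof -
    obtain c where c: "c \<in> {a<..<b}" "phi' c = 0"
      using sturm[OF P_pos su solphi l ab z] nz by auto
    then have "c = P/2" using phi'_zero[of c] ab by auto
    then show ?thesis using c by auto
  qed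
  have unique: "{l. sl_dirichlet_eigenvalue q P l \<and> l < 0} = {ls}"
  proof
    show "{ls} \<subseteq> {l. sl_dirichlet_eigenvalue q P l \<and> l < 0}" using ev_ls ls_neg by auto
  next
    show "{l. sl_dirichlet_eigenvalue q P l \<and> l < 0} \<subseteq> {ls}"
    proof
      fix l assume "l \<in> {l. sl_dirichlet_eigenvalue q P l \<and> l < 0}"
      then have ev: "sl_dirichlet_eigenvalue q P l" and l0: "l < 0" by auto
      have "ls \<le> l" by (rule minimal[OF ev])
      moreover have "\<not> ls < l"
      proof
        assume gt: "ls < l"
        obtain u where e: "sl_dirichlet_eigenfunction q P l u" using ev by (auto simp: sl_dirichlet_eigenvalue_def)
        obtain u1 x1 where su: "sol (\<lambda>x. q x + l) P u u1" and b: "u 0 = 0" "u P = 0"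
          and x1: "x1 \<in> {0<..<P}" "u x1 \<noteq> 0"
          using eigdata[OF e] by blast
        have lR: "\<bar>l\<bar> \<le> R" using gt l0 lsR by (simp add: abs_le_iff)
        have cu: "continuous_on {0..P} u" by (rule sol_cont(1)[OF su])
        have "\<exists>c\<in>{0<..<P}. u c = 0"
        proof (rule sturm[OF P_pos Ys su gt _ P_pos order_refl Y0 YlsP])
          fix x assume "x \<in> {0<..<P}" then show "Y ls x \<noteq> 0" using Yls_pos[of x] by simp
        qed simp
        then obtain c where c: "c \<in> {0<..<P}" "u c = 0" by blast
        obtain a1 b1 where ab1: "0 \<le> a1" "a1 < x1" "x1 < b1" "b1 \<le> P" "u a1 = 0" "u b1 = 0"
          "\<forall>x\<in>{a1<..<b1}. u x \<noteq> 0"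
          using consec_zeros[OF cu b, of x1] x1 by auto
        have mid1: "a1 < P/2 \<and> P/2 < b1" by (rule interval_mid[OF su l0]) (use ab1 in auto)
        have "c \<notin> {a1<..<b1}" using ab1(7) c(2) by auto
        then have "c \<le> a1 \<or> b1 \<le> c" by auto
        then show False
        proof
          assume ca: "c \<le> a1"
          have "\<exists>x2\<in>{0<..<a1}. u x2 \<noteq> 0"
          proof (rule ccontr)
            assume "\<not> ?thesis"
            then have "\<And>x. x \<in> {0..a1} \<Longrightarrow> u x = 0" using b ab1(5) by (metis atLeastAtMost_iff greaterThanLessThan_iff order_le_less)
            then have "u x1 = 0" using zero_on_interval[OF su gb[OF lR], of 0 a1 x1] ca c ab1 x1 by auto
            then show False using x1 by simp
          qed
          then obtain x2 where x2: "x2 \<in> {0<..<a1}" "u x2 \<noteq> 0" by blast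
          obtain a2 b2 where ab2: "0 \<le> a2" "a2 < x2" "x2 < b2" "b2 \<le> P" "u a2 = 0" "u b2 = 0"
            "\<forall>x\<in>{a2<..<b2}. u x \<noteq> 0"
            using consec_zeros[OF cu b, of x2] x2 ab1 by auto
          have "b2 \<le> a1"
          proof (rule ccontr)
            assume "\<not> b2 \<le> a1"
            then have "a1 \<in> {a2<..<b2}" using ab2 x2 by auto
            then show False using ab2(7) ab1(5) by auto
          qed
          moreover have "a2 < P/2 \<and> P/2 < b2" by (rule interval_mid[OF su l0]) (use ab2 in auto)
          ultimately show False using mid1 by auto
        next
          assume cb: "b1 \<le> c"
          have "\<exists>x2\<in>{b1<..<P}. u x2 \<noteq> 0"
          proof (rule ccontr)
            assume "\<not> ?thesis"
            then have "\<And>x. x \<in> {b1..P} \<Longrightarrow> u x = 0" using b ab1(6) by (metis atLeastAtMost_iff greaterThanLessThan_iff order_le_less)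
            then have "u x1 = 0" using zero_on_interval[OF su gb[OF lR], of b1 P x1] cb c ab1 x1 by auto
            then show False using x1 by simp
          qed
          then obtain x2 where x2: "x2 \<in> {b1<..<P}" "u x2 \<noteq> 0" by blast
          obtain a2 b2 where ab2: "0 \<le> a2" "a2 < x2" "x2 < b2" "b2 \<le> P" "u a2 = 0" "u b2 = 0"
            "\<forall>x\<in>{a2<..<b2}. u x \<noteq> 0"
            using consec_zeros[OF cu b, of x2] x2 ab1 by auto
          have "b1 \<le> a2"
          proof (rule ccontr)
            assume "\<not> b1 \<le> a2"
            then have "b1 \<in> {a2<..<b2}" using ab2 x2 by auto
            then show False using ab2(7) ab1(6) by auto
          qed
          moreover have "a2 < P/2 \<and> P/2 < b2" by (rule interval_mid[OF su l0]) (use ab2 in auto)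
          ultimately show False using mid1 by auto
        qed
      qed
      ultimately show "l \<in> {ls}" by simp
    qed
  qed

  have Ysym: "Y ls (P - x) = Y ls x" if x: "x \<in> {0..P}" for x
  proof -
    have sz: "sol (\<lambda>x. q x + ls) P (\<lambda>x. Y ls (P - x)) (\<lambda>x. - Y1 ls (P - x))"
      by (rule reflect_sol[OF Ys]) (simp add: q_sym)
    define c0 where "c0 = - Y1 ls P"
    have sw: "sol (\<lambda>x. q x + ls) P (\<lambda>x. 1 * Y ls (P - x) + (- c0) * Y ls x) (\<lambda>x. 1 * (- Y1 ls (P - x)) + (- c0) * Y1 ls x)"
      by (rule sol_lin[OF sz Ys])
    have w: "(\<lambda>x. 1 * Y ls (P - x) + (- c0) * Y ls x) y = 0" if y: "y \<in> {0..P}" for y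
      using ode_unique[OF sw gb[OF lsR], of 0 y] y P_pos by (simp add: YlsP Y0 Y10 c0_def)
    have "Y ls (P - P/2) = c0 * Y ls (P/2)" using w[of "P/2"] P_pos by simp
    then have "c0 = 1" using Yls_mid by simp
    then show ?thesis using w[OF x] by simp
  qed
  have symm: "\<forall>x\<in>{0..P}. u0 x = u0 (P - x) \<and> u0' (P - x) = - u0' x \<and> u0 (P - x) * u0' (P - x) = - (u0 x * u0' x)"
    if e: "sl_dirichlet_eigenfunction q P ls u0" and du: "\<forall>x\<in>{0..P}. (u0 has_real_derivative u0' x) (at x within {0..P})"
    for u0 u0'
  proof -
    obtain u1 where su: "sol (\<lambda>x. q x + ls) P u0 u1" using eig_sol[OF e] by blast
    have u00: "u0 0 = 0" using e by (simp add: sl_dirichlet_eigenfunction_def)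
    define k where "k = u1 0"
    have sw: "sol (\<lambda>x. q x + ls) P (\<lambda>x. 1 * u0 x + (- k) * Y ls x) (\<lambda>x. 1 * u1 x + (- k) * Y1 ls x)"
      by (rule sol_lin[OF su Ys])
    have uk: "u0 y = k * Y ls y" if y: "y \<in> {0..P}" for y
      using ode_unique[OF sw gb[OF lsR], of 0 y] y P_pos by (simp add: u00 Y0 Y10 k_def)
    have usym: "u0 (P - y) = u0 y" if y: "y \<in> {0..P}" for y
    proof -
      have "P - y \<in> {0..P}" using y by auto
      then show ?thesis using uk[of "P - y"] uk[OF y] Ysym[OF y] by simp
    qed
    show ?thesis
    proof
      fix x assume x: "x \<in> {0..P}"
      have x': "P - x \<in> {0..P}" using x by auto
      have d1: "((\<lambda>x. u0 (P - x)) has_real_derivative - u0' (P - x)) (at x within {0..P})"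
        by (rule reflect_deriv) (use du x' in auto)
      have d2: "(u0 has_real_derivative - u0' (P - x)) (at x within {0..P})"
        by (rule has_field_derivative_transform_within[OF d1 zero_less_one x]) (simp add: usym)
      have "- u0' (P - x) = u0' x" using deriv_unique_within[OF P_pos x d2] du x by auto
      then have eq: "u0' (P - x) = - u0' x" by simp
      then show "u0 x = u0 (P - x) \<and> u0' (P - x) = - u0' x \<and> u0 (P - x) * u0' (P - x) = - (u0 x * u0' x)"
        using usym[OF x] by (simp add: eq)
    qed
  qed
  show ?thesis
  proof (intro conjI)
    show "sl_dirichlet_eigenfunction q P 0 phi'" by (rule eig_phi)
    show "card {l. sl_dirichlet_eigenvalue q P l \<and> l < 0} = 1" by (simp add: unique)
    show "\<exists>l0. sl_dirichlet_eigenvalue q P l0 \<and> (\<forall>l. sl_dirichlet_eigenvalue q P l \<longrightarrow> l0 \<le> l) \<and> l0 < 0 \<and>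
       (\<forall>u0 u0'. sl_dirichlet_eigenfunction q P l0 u0 \<and> (\<forall>x\<in>{0..P}. (u0 has_real_derivative u0' x) (at x within {0..P})) \<longrightarrow>
          (\<forall>x\<in>{0..P}. u0 x = u0 (P - x) \<and> u0' (P - x) = - u0' x \<and> u0 (P - x) * u0' (P - x) = - (u0 x * u0' x)))"
      using ev_ls minimal ls_neg symm by blast
  qed
qed


end
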